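(* Let $\mathcal{C}$ be a quasicategory with markings $W_0\subseteq W$, where $W$ is weakly closed under composition, and let $F\colon(\mathcal{C},W)\to(\mathcal{C},W_0)$ be a marked endofunctor (i.e. an endomorphism of $\mathcal{C}$ sending $W$ into $W_0$). (1) If $(\mathcal{C},W_0)$ has the right lifting property against $\{\mathrm{LJ}^n_k\hookrightarrow\mathrm{L}^n_k \mid n\ge2,\ 0<k\le n\}$ and there exists a marked homotopy $\alpha\colon(\mathcal{C},W)\times(\Delta^1)^\sharp\to(\mathcal{C},W)$ from $\mathrm{id}$ to $F$, then $(\mathcal{C},W)$ satisfies CLF. (2) If $(\mathcal{C},W_0)$ has the right lifting property against $\{\mathrm{RJ}^n_k\hookrightarrow\mathrm{R}^n_k\mid n\ge2,\ 0\le k<n\}$ and there exists a marked homotopy $\alpha\colon(\mathcal{C},W)\times(\Delta^1)^\sharp\to(\mathcal{C},W)$ from $F$ to $\mathrm{id}$, then $(\mathcal{C},W)$ satisfies CRF.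
   Context: A marked simplicial set is a pair $(X,W)$ where $X$ is a simplicial set and $W \subseteq X_1$ contains all degenerate $1$-simplices; marked maps preserve marked $1$-simplices. $(\Delta^1)^\sharp$ is $\Delta^1$ with all $1$-simplices marked; products of marked simplicial sets are marked at pairs of marked $1$-simplices. A marked homotopy from $f$ to $g$ is a marked map $\alpha\colon (X,W)\times(\Delta^1)^\sharp\to(X',W')$ with $\alpha|_{X\times\{0\}}=f$, $\alpha|_{X\times\{1\}}=g$. Posets are regarded as simplicial sets via the nerve; $[n]=\{0<\dots<n\}$. For $n\ge 0$, $0\le k\le n$, $\mathrm{L}^n_k$ is the nerve of the poset of subsets $A\subseteq[n]$ with $k\in A$, ordered by inclusion, where $A_0\subseteq A_1$ is marked iff $\max A_0=\max A_1$; $\mathrm{LJ}^n_k\subseteq \mathrm{L}^n_k$ is the maximal simplicial subset not containing the vertex $[n]$. $\mathrm{R}^n_k$ is the nerve of the opposite poset (arrows $A_0\to A_1$ when $A_0\supseteq A_1$), where $A_0\supseteq A_1$ is marked iff $\min A_0=\min A_1$; $\mathrm{RJ}^n_k\subseteq\mathrm{R}^n_k$ is the maximal simplicial subset omitting the vertex $[n]$. $W$ is weakly closed under composition if every map $\Lambda^2_1\to X$ with both edges marked extends to a $2$-simplex all of whose edges are marked. A marked quasicategory $(\mathcal{C},W)$ satisfies CLF if $W$ is weakly closed under composition and it has the right lifting property against all $\mathrm{LJ}^n_k\hookrightarrow\mathrm{L}^n_k$ ($n\ge2$, $0<k\le n$); it satisfies CRF if $W$ is weakly closed under composition and it has the right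 lifting property against all $\mathrm{RJ}^n_k\hookrightarrow\mathrm{R}^n_k$ ($n\ge2$, $0\le k<n$). *)

theory Defs
  imports Main
begin

text \<open>A simplicial set is given by its sets of n-simplices and by the action of
  every monotone map theta : [m] -> [n] (represented as a function nat => nat,
  only its values on 0..m matter), sending n-simplices to m-simplices.\<close>

record 'a sset =
  ssimp :: "nat \<Rightarrow> 'a set"
  smap  :: "nat \<Rightarrow> nat \<Rightarrow> (nat \<Rightarrow> nat) \<Rightarrow> 'a \<Rightarrow> 'a"

definition mono_map :: "nat \<Rightarrow> nat \<Rightarrow> (nat \<Rightarrow> nat) \<Rightarrow> bool" where
  "mono_map m n \<theta> \<longleftrightarrow> (\<forall>i\<le>m. \<theta> i \<le> n) \<and> (\<forall>i j. i \<le> j \<longrightarrow> j \<le> m \<longrightarrow> \<theta> i \<le> \<theta> j)"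

definition sset :: "'a sset \<Rightarrow> bool" where
  "sset X \<longleftrightarrow>
     (\<forall>m n \<theta> x. mono_map m n \<theta> \<longrightarrow> x \<in> ssimp X n \<longrightarrow> smap X m n \<theta> x \<in> ssimp X m) \<and>
     (\<forall>n x. x \<in> ssimp X n \<longrightarrow> smap X n n id x = x) \<and>
     (\<forall>l m n \<psi> \<theta> x. mono_map l m \<psi> \<longrightarrow> mono_map m n \<theta> \<longrightarrow> x \<in> ssimp X n \<longrightarrow>
         smap X l m \<psi> (smap X m n \<theta> x) = smap X l n (\<theta> \<circ> \<psi>) x) \<and>
     (\<forall>m n \<theta> \<theta>' x. mono_map m n \<theta> \<longrightarrow> (\<forall>i\<le>m. \<theta> i = \<theta>' i) \<longrightarrow> x \<in> ssimp X n \<longrightarrow>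
         smap X m n \<theta> x = smap X m n \<theta>' x)"

definition ssmap :: "'a sset \<Rightarrow> 'b sset \<Rightarrow> (nat \<Rightarrow> 'a \<Rightarrow> 'b) \<Rightarrow> bool" where
  "ssmap X Y f \<longleftrightarrow>
     (\<forall>n x. x \<in> ssimp X n \<longrightarrow> f n x \<in> ssimp Y n) \<and>
     (\<forall>m n \<theta> x. mono_map m n \<theta> \<longrightarrow> x \<in> ssimp X n \<longrightarrow>
         f m (smap X m n \<theta> x) = smap Y m n \<theta> (f n x))"

definition subsset :: "'a sset \<Rightarrow> (nat \<Rightarrow> 'a set) \<Rightarrow> 'a sset" where
  "subsset X S = \<lparr>ssimp = S, smap = smap X\<rparr>"

definition nerve :: "'p set \<Rightarrow> ('p \<Rightarrow> 'p \<Rightarrow> bool) \<Rightarrow> (nat \<Rightarrow> 'p) sset" where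
  "nerve P le = \<lparr>ssimp = (\<lambda>n. {\<sigma>. (\<forall>i\<le>n. \<sigma> i \<in> P) \<and>
                                 (\<forall>i j. i \<le> j \<longrightarrow> j \<le> n \<longrightarrow> le (\<sigma> i) (\<sigma> j)) \<and>
                                 (\<forall>i>n. \<sigma> i = undefined)}),
                 smap = (\<lambda>m n \<theta> \<sigma>. (\<lambda>i. if i \<le> m then \<sigma> (\<theta> i) else undefined))\<rparr>"

definition Delta :: "nat \<Rightarrow> (nat \<Rightarrow> nat) sset" where
  "Delta n = nerve {0..n} (\<le>)"

text \<open>Horn: union of the faces d_j Delta^n, j /= k.\<close>
definition horn :: "nat \<Rightarrow> nat \<Rightarrow> (nat \<Rightarrow> nat) sset" where
  "horn n k = subsset (Delta n)
     (\<lambda>m. {\<sigma> \<in> ssimp (Delta n) m. \<exists>j\<le>n. j \<noteq> k \<and> j \<notin> \<sigma> ` {0..m}})"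

definition sprod :: "'a sset \<Rightarrow> 'b sset \<Rightarrow> ('a \<times> 'b) sset" where
  "sprod X Y = \<lparr>ssimp = (\<lambda>n. ssimp X n \<times> ssimp Y n),
                smap = (\<lambda>m n \<theta> p. (smap X m n \<theta> (fst p), smap Y m n \<theta> (snd p)))\<rparr>"

definition const_simplex :: "nat \<Rightarrow> nat \<Rightarrow> (nat \<Rightarrow> nat)" where
  "const_simplex n e = (\<lambda>i. if i \<le> n then e else undefined)"

definition rlp :: "'b sset \<Rightarrow> 'b sset \<Rightarrow> 'a sset \<Rightarrow> bool" where
  "rlp A B X \<longleftrightarrow> (\<forall>f. ssmap A X f \<longrightarrow>
      (\<exists>g. ssmap B X g \<and> (\<forall>m x. x \<in> ssimp A m \<longrightarrow> g m x = f m x)))"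

definition quasicategory :: "'a sset \<Rightarrow> bool" where
  "quasicategory X \<longleftrightarrow> sset X \<and>
     (\<forall>n k. 0 < k \<longrightarrow> k < n \<longrightarrow> rlp (horn n k) (Delta n) X)"

definition marked_sset :: "'a sset \<Rightarrow> 'a set \<Rightarrow> bool" where
  "marked_sset X W \<longleftrightarrow> sset X \<and> W \<subseteq> ssimp X 1 \<and>
     (\<forall>x\<in>ssimp X 0. smap X 1 0 (\<lambda>_. 0) x \<in> W)"

definition marked_map :: "'a sset \<Rightarrow> 'a set \<Rightarrow> 'b sset \<Rightarrow> 'b set \<Rightarrow> (nat \<Rightarrow> 'a \<Rightarrow> 'b) \<Rightarrow> bool" where
  "marked_map X W Y V f \<longleftrightarrow> ssmap X Y f \<and> f 1 ` W \<subseteq> V"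

definition marked_rlp :: "'b sset \<Rightarrow> 'b sset \<Rightarrow> 'b set \<Rightarrow> 'a sset \<Rightarrow> 'a set \<Rightarrow> bool" where
  "marked_rlp A B M X W \<longleftrightarrow> (\<forall>f. marked_map A (M \<inter> ssimp A 1) X W f \<longrightarrow>
      (\<exists>g. marked_map B M X W g \<and> (\<forall>m x. x \<in> ssimp A m \<longrightarrow> g m x = f m x)))"

definition marked_homotopy ::
  "'a sset \<Rightarrow> 'a set \<Rightarrow> 'b sset \<Rightarrow> 'b set \<Rightarrow> (nat \<Rightarrow> 'a \<times> (nat \<Rightarrow> nat) \<Rightarrow> 'b)
     \<Rightarrow> (nat \<Rightarrow> 'a \<Rightarrow> 'b) \<Rightarrow> (nat \<Rightarrow> 'a \<Rightarrow> 'b) \<Rightarrow> bool" where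
  "marked_homotopy X W Y V \<alpha> f g \<longleftrightarrow>
     marked_map (sprod X (Delta 1)) (W \<times> ssimp (Delta 1) 1) Y V \<alpha> \<and>
     (\<forall>n x. x \<in> ssimp X n \<longrightarrow> \<alpha> n (x, const_simplex n 0) = f n x) \<and>
     (\<forall>n x. x \<in> ssimp X n \<longrightarrow> \<alpha> n (x, const_simplex n 1) = g n x)"

definition weakly_closed :: "'a sset \<Rightarrow> 'a set \<Rightarrow> bool" where
  "weakly_closed X W \<longleftrightarrow> (\<forall>h. ssmap (horn 2 1) X h \<and> h 1 ` ssimp (horn 2 1) 1 \<subseteq> W \<longrightarrow>
      (\<exists>g. ssmap (Delta 2) X g \<and> g 1 ` ssimp (Delta 2) 1 \<subseteq> W \<and>
           (\<forall>m x. x \<in> ssimp (horn 2 1) m \<longrightarrow> g m x = h m x)))"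

definition subsets_with :: "nat \<Rightarrow> nat \<Rightarrow> nat set set" where
  "subsets_with n k = {A. A \<subseteq> {0..n} \<and> k \<in> A}"

definition L :: "nat \<Rightarrow> nat \<Rightarrow> (nat \<Rightarrow> nat set) sset" where
  "L n k = nerve (subsets_with n k) (\<subseteq>)"

definition L_marked :: "nat \<Rightarrow> nat \<Rightarrow> (nat \<Rightarrow> nat set) set" where
  "L_marked n k = {\<sigma> \<in> ssimp (L n k) 1. Max (\<sigma> 0) = Max (\<sigma> 1)}"

definition LJ :: "nat \<Rightarrow> nat \<Rightarrow> (nat \<Rightarrow> nat set) sset" where
  "LJ n k = subsset (L n k) (\<lambda>m. {\<sigma> \<in> ssimp (L n k) m. \<forall>i\<le>m. \<sigma> i \<noteq> {0..n}})"

definition R :: "nat \<Rightarrow> nat \<Rightarrow> (nat \<Rightarrow> nat set) sset" where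
  "R n k = nerve (subsets_with n k) (\<supseteq>)"

definition R_marked :: "nat \<Rightarrow> nat \<Rightarrow> (nat \<Rightarrow> nat set) set" where
  "R_marked n k = {\<sigma> \<in> ssimp (R n k) 1. Min (\<sigma> 0) = Min (\<sigma> 1)}"

definition RJ :: "nat \<Rightarrow> nat \<Rightarrow> (nat \<Rightarrow> nat set) sset" where
  "RJ n k = subsset (R n k) (\<lambda>m. {\<sigma> \<in> ssimp (R n k) m. \<forall>i\<le>m. \<sigma> i \<noteq> {0..n}})"

definition rlp_L :: "'a sset \<Rightarrow> 'a set \<Rightarrow> bool" where
  "rlp_L X W \<longleftrightarrow> (\<forall>n k. 2 \<le> n \<longrightarrow> 0 < k \<longrightarrow> k \<le> n \<longrightarrow>
      marked_rlp (LJ n k) (L n k) (L_marked n k) X W)"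

definition rlp_R :: "'a sset \<Rightarrow> 'a set \<Rightarrow> bool" where
  "rlp_R X W \<longleftrightarrow> (\<forall>n k. 2 \<le> n \<longrightarrow> k < n \<longrightarrow>
      marked_rlp (RJ n k) (R n k) (R_marked n k) X W)"

definition CLF :: "'a sset \<Rightarrow> 'a set \<Rightarrow> bool" where
  "CLF X W \<longleftrightarrow> weakly_closed X W \<and> rlp_L X W"

definition CRF :: "'a sset \<Rightarrow> 'a set \<Rightarrow> bool" where
  "CRF X W \<longleftrightarrow> weakly_closed X W \<and> rlp_R X W"

end

theory Submission
  imports Defs
begin

definition po_on :: "'p set \<Rightarrow> ('p \<Rightarrow> 'p \<Rightarrow> bool) \<Rightarrow> bool" where
  "po_on Q le \<longleftrightarrow> (\<forall>x\<in>Q. le x x) \<and> (\<forall>x\<in>Q. \<forall>y\<in>Q. le x y \<longrightarrow> le y x \<longrightarrow> x = y) \<and>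
     (\<forall>x\<in>Q. \<forall>y\<in>Q. \<forall>z\<in>Q. le x y \<longrightarrow> le y z \<longrightarrow> le x z)"

definition chain_on :: "'p set \<Rightarrow> ('p \<Rightarrow> 'p \<Rightarrow> bool) \<Rightarrow> 'p set \<Rightarrow> bool" where
  "chain_on Q le U \<longleftrightarrow> U \<subseteq> Q \<and> finite U \<and> U \<noteq> {} \<and> (\<forall>x\<in>U. \<forall>y\<in>U. le x y \<or> le y x)"

definition idx :: "('p \<Rightarrow> 'p \<Rightarrow> bool) \<Rightarrow> 'p set \<Rightarrow> 'p \<Rightarrow> nat" where
  "idx le U x = card {y\<in>U. le y x \<and> y \<noteq> x}"

definition enum :: "('p \<Rightarrow> 'p \<Rightarrow> bool) \<Rightarrow> 'p set \<Rightarrow> nat \<Rightarrow> 'p" where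
  "enum le U i = (THE x. x \<in> U \<and> idx le U x = i)"

lemma po_antisym: "po_on Q le \<Longrightarrow> x \<in> Q \<Longrightarrow> y \<in> Q \<Longrightarrow> le x y \<Longrightarrow> le y x \<Longrightarrow> x = y"
  unfolding po_on_def by blast
lemma po_trans: "po_on Q le \<Longrightarrow> x \<in> Q \<Longrightarrow> y \<in> Q \<Longrightarrow> z \<in> Q \<Longrightarrow> le x y \<Longrightarrow> le y z \<Longrightarrow> le x z"
  unfolding po_on_def by blast
lemma po_refl: "po_on Q le \<Longrightarrow> x \<in> Q \<Longrightarrow> le x x"
  unfolding po_on_def by blast

lemma chain_sub:
  assumes "chain_on Q le U" "V \<subseteq> U" "V \<noteq> {}"
  shows "chain_on Q le V"
  using assms unfolding chain_on_def by (auto intro: finite_subset)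

lemma idx_strict:
  assumes po: "po_on Q le" and ch: "chain_on Q le U" and xy: "x \<in> U" "y \<in> U" "le x y" "x \<noteq> y"
  shows "idx le U x < idx le U y"
proof -
  have UQ: "U \<subseteq> Q" and fin: "finite U" using ch unfolding chain_on_def by auto
  have sub: "{z\<in>U. le z x \<and> z \<noteq> x} \<subseteq> {z\<in>U. le z y \<and> z \<noteq> y}"
  proof
    fix z assume z: "z \<in> {z\<in>U. le z x \<and> z \<noteq> x}"
    then have "le z y" using po_trans[OF po, of z x y] xy UQ by auto
    moreover have "z \<noteq> y"
    proof
      assume "z = y"
      then have "le y x" using z by auto
      then show False using po_antisym[OF po, of x y] xy UQ by auto
    qed
    ultimately show "z \<in> {z\<in>U. le z y \<and> z \<noteq> y}" using z by auto
  qed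
  moreover have "x \<in> {z\<in>U. le z y \<and> z \<noteq> y}" "x \<notin> {z\<in>U. le z x \<and> z \<noteq> x}" using xy by auto
  ultimately have "{z\<in>U. le z x \<and> z \<noteq> x} \<subset> {z\<in>U. le z y \<and> z \<noteq> y}" by blast
  then show ?thesis unfolding idx_def by (rule psubset_card_mono[rotated]) (use fin in auto)
qed

lemma idx_less:
  assumes ch: "chain_on Q le U" and x: "x \<in> U"
  shows "idx le U x < card U"
proof -
  have fin: "finite U" using ch unfolding chain_on_def by auto
  have "{y\<in>U. le y x \<and> y \<noteq> x} \<subseteq> U - {x}" by auto
  then have "idx le U x \<le> card (U - {x})" unfolding idx_def by (rule card_mono[rotated]) (use fin in auto)
  also have "\<dots> < card U" using x fin by (meson card_Diff1_less)
  finally show ?thesis .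
qed

lemma idx_mono:
  assumes po: "po_on Q le" and ch: "chain_on Q le U" and xy: "x \<in> U" "y \<in> U" "le x y"
  shows "idx le U x \<le> idx le U y"
  using idx_strict[OF po ch xy] by (cases "x = y") auto

lemma idx_inj:
  assumes po: "po_on Q le" and ch: "chain_on Q le U"
  shows "inj_on (idx le U) U"
proof (rule inj_onI)
  fix x y assume xy: "x \<in> U" "y \<in> U" "idx le U x = idx le U y"
  show "x = y"
  proof (rule ccontr)
    assume ne: "x \<noteq> y"
    have "le x y \<or> le y x" using ch xy unfolding chain_on_def by auto
    then show False
    proof
      assume "le x y" then show False using idx_strict[OF po ch xy(1,2) _ ne] xy(3) by auto
    next
      assume "le y x" then show False using idx_strict[OF po ch xy(2,1) _ ne[symmetric]] xy(3) by auto
    qed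
  qed
qed

lemma idx_image:
  assumes po: "po_on Q le" and ch: "chain_on Q le U"
  shows "idx le U ` U = {..<card U}"
proof -
  have fin: "finite U" using ch unfolding chain_on_def by auto
  have "idx le U ` U \<subseteq> {..<card U}" using idx_less[OF ch] by auto
  moreover have "card (idx le U ` U) = card {..<card U}"
    using card_image[OF idx_inj[OF po ch]] by simp
  ultimately show ?thesis by (intro card_subset_eq) auto
qed

lemma enum_props:
  assumes po: "po_on Q le" and ch: "chain_on Q le U" and i: "i < card U"
  shows "enum le U i \<in> U \<and> idx le U (enum le U i) = i"
proof -
  obtain x where x: "x \<in> U" "idx le U x = i" using idx_image[OF po ch] i by (metis imageE lessThan_iff)
  have "\<exists>!x. x \<in> U \<and> idx le U x = i"
    using x idx_inj[OF po ch] unfolding inj_on_def by blast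
  then show ?thesis unfolding enum_def by (rule theI')
qed

lemma enum_in: "po_on Q le \<Longrightarrow> chain_on Q le U \<Longrightarrow> i < card U \<Longrightarrow> enum le U i \<in> U"
  using enum_props by blast

lemma idx_enum: "po_on Q le \<Longrightarrow> chain_on Q le U \<Longrightarrow> i < card U \<Longrightarrow> idx le U (enum le U i) = i"
  using enum_props by blast

lemma enum_idx:
  assumes po: "po_on Q le" and ch: "chain_on Q le U" and x: "x \<in> U"
  shows "enum le U (idx le U x) = x"
proof -
  have i: "idx le U x < card U" using idx_less[OF ch x] .
  show ?thesis using enum_props[OF po ch i] idx_inj[OF po ch] x unfolding inj_on_def by blast
qed

lemma enum_mono:
  assumes po: "po_on Q le" and ch: "chain_on Q le U" and ij: "i \<le> j" "j < card U"
  shows "le (enum le U i) (enum le U j)"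
proof (rule ccontr)
  assume nle: "\<not> le (enum le U i) (enum le U j)"
  have i: "i < card U" using ij by auto
  have mem: "enum le U i \<in> U" "enum le U j \<in> U" using enum_in[OF po ch] i ij by auto
  then have "le (enum le U j) (enum le U i)" using nle ch unfolding chain_on_def by blast
  moreover have "enum le U j \<noteq> enum le U i" using nle po_refl[OF po] mem ch unfolding chain_on_def by auto
  ultimately have "idx le U (enum le U j) < idx le U (enum le U i)"
    using idx_strict[OF po ch mem(2) mem(1)] by auto
  then show False using idx_enum[OF po ch] i ij by auto
qed

lemma enum_inj:
  assumes po: "po_on Q le" and ch: "chain_on Q le U" and ij: "i < card U" "j < card U"
    and eq: "enum le U i = enum le U j"
  shows "i = j"
  using idx_enum[OF po ch ij(1)] idx_enum[OF po ch ij(2)] eq by metis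

subsection \<open>Nerves and subcomplexes given by families of chains\<close>

lemma nerve_ssimp: "\<sigma> \<in> ssimp (nerve Q le) m \<longleftrightarrow> (\<forall>i\<le>m. \<sigma> i \<in> Q) \<and>
   (\<forall>i j. i \<le> j \<longrightarrow> j \<le> m \<longrightarrow> le (\<sigma> i) (\<sigma> j)) \<and> (\<forall>i>m. \<sigma> i = undefined)"
  unfolding nerve_def by simp

lemma nerve_smap: "smap (nerve Q le) m n \<theta> \<sigma> = (\<lambda>i. if i \<le> m then \<sigma> (\<theta> i) else undefined)"
  unfolding nerve_def by simp

lemma Delta_ssimp: "\<rho> \<in> ssimp (Delta d) m \<longleftrightarrow> (\<forall>i\<le>m. \<rho> i \<le> d) \<and>
   (\<forall>i j. i \<le> j \<longrightarrow> j \<le> m \<longrightarrow> \<rho> i \<le> \<rho> j) \<and> (\<forall>i>m. \<rho> i = undefined)"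
  unfolding Delta_def nerve_ssimp by simp

lemma Delta_smap: "smap (Delta d) m n \<theta> \<rho> = (\<lambda>i. if i \<le> m then \<rho> (\<theta> i) else undefined)"
  unfolding Delta_def nerve_smap by simp

lemma horn_ssimp: "\<rho> \<in> ssimp (horn d k) m \<longleftrightarrow> \<rho> \<in> ssimp (Delta d) m \<and> (\<exists>j\<le>d. j \<noteq> k \<and> j \<notin> \<rho> ` {0..m})"
  unfolding horn_def subsset_def by simp

lemma horn_smap: "smap (horn d k) = smap (Delta d)"
  unfolding horn_def subsset_def by simp

definition Sc :: "'p set \<Rightarrow> ('p \<Rightarrow> 'p \<Rightarrow> bool) \<Rightarrow> 'p set set \<Rightarrow> (nat \<Rightarrow> 'p) sset" where
  "Sc Q le F = subsset (nerve Q le) (\<lambda>m. {\<sigma> \<in> ssimp (nerve Q le) m. \<sigma> ` {0..m} \<in> F})"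

lemma Sc_ssimp: "\<sigma> \<in> ssimp (Sc Q le F) m \<longleftrightarrow> \<sigma> \<in> ssimp (nerve Q le) m \<and> \<sigma> ` {0..m} \<in> F"
  unfolding Sc_def subsset_def by simp

lemma Sc_smap: "smap (Sc Q le F) m n \<theta> \<sigma> = (\<lambda>i. if i \<le> m then \<sigma> (\<theta> i) else undefined)"
  unfolding Sc_def subsset_def nerve_smap by simp

definition down_closed :: "'p set set \<Rightarrow> bool" where
  "down_closed F \<longleftrightarrow> (\<forall>U\<in>F. \<forall>V. V \<subseteq> U \<longrightarrow> V \<noteq> {} \<longrightarrow> V \<in> F)"

lemma dcD: "down_closed F \<Longrightarrow> U \<in> F \<Longrightarrow> V \<subseteq> U \<Longrightarrow> V \<noteq> {} \<Longrightarrow> V \<in> F"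
  unfolding down_closed_def by blast

definition eseq :: "('p \<Rightarrow> 'p \<Rightarrow> bool) \<Rightarrow> 'p set \<Rightarrow> nat \<Rightarrow> (nat \<Rightarrow> nat) \<Rightarrow> (nat \<Rightarrow> 'p)" where
  "eseq le \<tau> m \<rho> = (\<lambda>i. if i \<le> m then enum le \<tau> (\<rho> i) else undefined)"

definition iseq :: "('p \<Rightarrow> 'p \<Rightarrow> bool) \<Rightarrow> 'p set \<Rightarrow> nat \<Rightarrow> (nat \<Rightarrow> 'p) \<Rightarrow> (nat \<Rightarrow> nat)" where
  "iseq le \<tau> m \<sigma> = (\<lambda>i. if i \<le> m then idx le \<tau> (\<sigma> i) else undefined)"

lemma mono_mapD: "mono_map m n \<theta> \<Longrightarrow> i \<le> m \<Longrightarrow> \<theta> i \<le> n"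
  unfolding mono_map_def by blast

lemma mono_mapD2: "mono_map m n \<theta> \<Longrightarrow> i \<le> j \<Longrightarrow> j \<le> m \<Longrightarrow> \<theta> i \<le> \<theta> j"
  unfolding mono_map_def by blast

lemma nerve_smap_in:
  assumes "\<sigma> \<in> ssimp (nerve Q le) n" "mono_map m n \<theta>"
  shows "smap (nerve Q le) m n \<theta> \<sigma> \<in> ssimp (nerve Q le) m"
  unfolding nerve_ssimp nerve_smap
proof (intro conjI allI impI)
  fix i assume "i \<le> m"
  then show "(if i \<le> m then \<sigma> (\<theta> i) else undefined) \<in> Q"
    using assms mono_mapD[OF assms(2)] unfolding nerve_ssimp by auto
next
  fix i j assume ij: "i \<le> j" "j \<le> m"
  have "\<theta> i \<le> \<theta> j" "\<theta> j \<le> n" using mono_mapD2[OF assms(2) ij] mono_mapD[OF assms(2) ij(2)] by auto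
  then show "le (if i \<le> m then \<sigma> (\<theta> i) else undefined) (if j \<le> m then \<sigma> (\<theta> j) else undefined)"
    using assms(1) ij unfolding nerve_ssimp by auto
qed auto

lemma nerve_smap_image:
  assumes "mono_map m n \<theta>"
  shows "smap (nerve Q le) m n \<theta> \<sigma> ` {0..m} \<subseteq> \<sigma> ` {0..n}"
  using assms unfolding nerve_smap by (auto dest: mono_mapD)

lemma Sc_smap_in:
  assumes "\<sigma> \<in> ssimp (Sc Q le F) n" "mono_map m n \<theta>" "down_closed F"
  shows "smap (Sc Q le F) m n \<theta> \<sigma> \<in> ssimp (Sc Q le F) m"
proof -
  have a: "\<sigma> \<in> ssimp (nerve Q le) n" "\<sigma> ` {0..n} \<in> F" using assms(1) by (simp_all add: Sc_ssimp)
  have e: "smap (Sc Q le F) m n \<theta> \<sigma> = smap (nerve Q le) m n \<theta> \<sigma>" by (simp add: Sc_smap nerve_smap)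
  have ne: "smap (nerve Q le) m n \<theta> \<sigma> ` {0..m} \<noteq> {}" by auto
  have "smap (nerve Q le) m n \<theta> \<sigma> ` {0..m} \<in> F"
    by (rule dcD[OF assms(3) a(2) nerve_smap_image[OF assms(2)] ne])
  then show ?thesis using nerve_smap_in[OF a(1) assms(2)] unfolding e by (simp add: Sc_ssimp)
qed

lemma nerve_image_chain:
  assumes "\<sigma> \<in> ssimp (nerve Q le) m"
  shows "chain_on Q le (\<sigma> ` {0..m})"
  unfolding chain_on_def
proof (intro conjI)
  show "\<sigma> ` {0..m} \<subseteq> Q" using assms unfolding nerve_ssimp by auto
  show "\<forall>x\<in>\<sigma> ` {0..m}. \<forall>y\<in>\<sigma> ` {0..m}. le x y \<or> le y x"
  proof (intro ballI)
    fix x y assume "x \<in> \<sigma> ` {0..m}" "y \<in> \<sigma> ` {0..m}"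
    then obtain i j where ij: "i \<le> m" "j \<le> m" "x = \<sigma> i" "y = \<sigma> j" by auto
    show "le x y \<or> le y x"
    proof (cases "i \<le> j")
      case True then show ?thesis using assms ij unfolding nerve_ssimp by auto
    next
      case False then show ?thesis using assms ij unfolding nerve_ssimp by auto
    qed
  qed
qed auto

lemma eseq_in_Sc:
  assumes po: "po_on Q le" and dc: "down_closed F"
    and ch: "chain_on Q le \<tau>" and v: "v \<in> \<tau>"
    and faces: "\<forall>U. U \<subseteq> \<tau> \<longrightarrow> U \<noteq> {} \<longrightarrow> (\<exists>w\<in>\<tau>. w \<noteq> v \<and> w \<notin> U) \<longrightarrow> U \<in> F"
    and r: "\<rho> \<in> ssimp (horn (card \<tau> - 1) (idx le \<tau> v)) m"
  shows "eseq le \<tau> m \<rho> \<in> ssimp (Sc Q le F) m \<and> eseq le \<tau> m \<rho> ` {0..m} \<subseteq> \<tau>"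
proof -
  let ?d = "card \<tau> - 1" and ?k = "idx le \<tau> v"
  have fin: "finite \<tau>" and ne: "\<tau> \<noteq> {}" and tQ: "\<tau> \<subseteq> Q" using ch unfolding chain_on_def by auto
  have cpos: "card \<tau> > 0" using fin ne by (simp add: card_gt_0_iff)
  have rD: "\<rho> \<in> ssimp (Delta ?d) m" and j: "\<exists>j\<le>?d. j \<noteq> ?k \<and> j \<notin> \<rho> ` {0..m}"
    using r horn_ssimp by auto
  have rl: "\<rho> i < card \<tau>" if "i \<le> m" for i using rD that cpos unfolding Delta_ssimp by force
  have n: "eseq le \<tau> m \<rho> \<in> ssimp (nerve Q le) m"
    unfolding nerve_ssimp eseq_def
  proof (intro conjI allI impI)
    fix i assume "i \<le> m" then show "(if i \<le> m then enum le \<tau> (\<rho> i) else undefined) \<in> Q"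
      using enum_in[OF po ch rl] tQ by auto
  next
    fix i j assume ij: "i \<le> j" "j \<le> m"
    have "\<rho> i \<le> \<rho> j" using rD ij unfolding Delta_ssimp by blast
    then show "le (if i \<le> m then enum le \<tau> (\<rho> i) else undefined) (if j \<le> m then enum le \<tau> (\<rho> j) else undefined)"
      using enum_mono[OF po ch _ rl[of j]] ij by auto
  qed auto
  obtain j where j: "j \<le> ?d" "j \<noteq> ?k" "j \<notin> \<rho> ` {0..m}" using j by blast
  have jl: "j < card \<tau>" using j cpos by linarith
  have kl: "?k < card \<tau>" using idx_less[OF ch v] .
  have img: "eseq le \<tau> m \<rho> ` {0..m} = enum le \<tau> ` \<rho> ` {0..m}" unfolding eseq_def by auto
  have "enum le \<tau> j \<notin> eseq le \<tau> m \<rho> ` {0..m}"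
  proof
    assume "enum le \<tau> j \<in> eseq le \<tau> m \<rho> ` {0..m}"
    then obtain i where i: "i \<le> m" "enum le \<tau> j = enum le \<tau> (\<rho> i)" unfolding img by auto
    then have "j = \<rho> i" using enum_inj[OF po ch jl rl[OF i(1)]] by auto
    then show False using j i by auto
  qed
  moreover have "enum le \<tau> j \<noteq> v"
  proof
    assume "enum le \<tau> j = v"
    then have "j = ?k" using idx_enum[OF po ch jl] by auto
    then show False using j by auto
  qed
  moreover have "eseq le \<tau> m \<rho> ` {0..m} \<subseteq> \<tau>" unfolding img using enum_in[OF po ch] rl by auto
  moreover have "enum le \<tau> j \<in> \<tau>" using enum_in[OF po ch jl] .
  moreover have "eseq le \<tau> m \<rho> ` {0..m} \<noteq> {}" by auto
  ultimately have "eseq le \<tau> m \<rho> ` {0..m} \<in> F" using faces by blast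
  then show ?thesis using n \<open>eseq le \<tau> m \<rho> ` {0..m} \<subseteq> \<tau>\<close> by (simp add: Sc_ssimp)
qed

lemma horn_map:
  assumes po: "po_on Q le" and g: "ssmap (Sc Q le F) C g" and dc: "down_closed F"
    and ch: "chain_on Q le \<tau>" and v: "v \<in> \<tau>"
    and faces: "\<forall>U. U \<subseteq> \<tau> \<longrightarrow> U \<noteq> {} \<longrightarrow> (\<exists>w\<in>\<tau>. w \<noteq> v \<and> w \<notin> U) \<longrightarrow> U \<in> F"
  shows "ssmap (horn (card \<tau> - 1) (idx le \<tau> v)) C (\<lambda>m \<rho>. g m (eseq le \<tau> m \<rho>))"
proof -
  let ?d = "card \<tau> - 1" and ?k = "idx le \<tau> v"
  have fin: "finite \<tau>" and ne: "\<tau> \<noteq> {}" and tQ: "\<tau> \<subseteq> Q" using ch unfolding chain_on_def by auto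
  have cpos: "card \<tau> > 0" using fin ne by (simp add: card_gt_0_iff)
  have inS: "eseq le \<tau> m \<rho> \<in> ssimp (Sc Q le F) m" if r: "\<rho> \<in> ssimp (horn ?d ?k) m" for m \<rho>
  proof -
    have rD: "\<rho> \<in> ssimp (Delta ?d) m" and j: "\<exists>j\<le>?d. j \<noteq> ?k \<and> j \<notin> \<rho> ` {0..m}"
      using r horn_ssimp by auto
    have rl: "\<rho> i < card \<tau>" if "i \<le> m" for i using rD that cpos unfolding Delta_ssimp by force
    have n: "eseq le \<tau> m \<rho> \<in> ssimp (nerve Q le) m"
      unfolding nerve_ssimp eseq_def
    proof (intro conjI allI impI)
      fix i assume "i \<le> m" then show "(if i \<le> m then enum le \<tau> (\<rho> i) else undefined) \<in> Q"
        using enum_in[OF po ch rl] tQ by auto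
    next
      fix i j assume ij: "i \<le> j" "j \<le> m"
      have "\<rho> i \<le> \<rho> j" using rD ij unfolding Delta_ssimp by blast
      then show "le (if i \<le> m then enum le \<tau> (\<rho> i) else undefined) (if j \<le> m then enum le \<tau> (\<rho> j) else undefined)"
        using enum_mono[OF po ch _ rl[of j]] ij by auto
    qed auto
    obtain j where j: "j \<le> ?d" "j \<noteq> ?k" "j \<notin> \<rho> ` {0..m}" using j by blast
    have jl: "j < card \<tau>" using j cpos by linarith
    have kl: "?k < card \<tau>" using idx_less[OF ch v] .
    have img: "eseq le \<tau> m \<rho> ` {0..m} = enum le \<tau> ` \<rho> ` {0..m}" unfolding eseq_def by auto
    have "enum le \<tau> j \<notin> eseq le \<tau> m \<rho> ` {0..m}"
    proof
      assume "enum le \<tau> j \<in> eseq le \<tau> m \<rho> ` {0..m}"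
      then obtain i where i: "i \<le> m" "enum le \<tau> j = enum le \<tau> (\<rho> i)" unfolding img by auto
      then have "j = \<rho> i" using enum_inj[OF po ch jl rl[OF i(1)]] by auto
      then show False using j i by auto
    qed
    moreover have "enum le \<tau> j \<noteq> v"
    proof
      assume "enum le \<tau> j = v"
      then have "j = ?k" using idx_enum[OF po ch jl] by auto
      then show False using j by auto
    qed
    moreover have "eseq le \<tau> m \<rho> ` {0..m} \<subseteq> \<tau>" unfolding img using enum_in[OF po ch] rl by auto
    moreover have "enum le \<tau> j \<in> \<tau>" using enum_in[OF po ch jl] .
    moreover have "eseq le \<tau> m \<rho> ` {0..m} \<noteq> {}" by auto
    ultimately have "eseq le \<tau> m \<rho> ` {0..m} \<in> F" using faces by blast
    then show ?thesis using n by (simp add: Sc_ssimp)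
  qed
  show ?thesis unfolding ssmap_def
  proof (intro conjI allI impI)
    fix n x assume "x \<in> ssimp (horn ?d ?k) n"
    then show "g n (eseq le \<tau> n x) \<in> ssimp C n" using inS g unfolding ssmap_def by blast
  next
    fix m n \<theta> x assume th: "mono_map m n \<theta>" and x: "x \<in> ssimp (horn ?d ?k) n"
    have e: "eseq le \<tau> m (smap (horn ?d ?k) m n \<theta> x) = smap (Sc Q le F) m n \<theta> (eseq le \<tau> n x)"
      unfolding horn_smap Delta_smap Sc_smap eseq_def using mono_mapD[OF th] by (auto intro!: ext)
    show "g m (eseq le \<tau> m (smap (horn ?d ?k) m n \<theta> x)) = smap C m n \<theta> (g n (eseq le \<tau> n x))"
      unfolding e using g th inS[OF x] unfolding ssmap_def by blast
  qed
qed

definition tauof :: "'p set set \<Rightarrow> 'p set \<Rightarrow> 'p set" where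
  "tauof T U = (THE \<tau>. \<tau> \<in> T \<and> U \<subseteq> \<tau>)"

definition ext_map ::
  "'p set set \<Rightarrow> ('p \<Rightarrow> 'p \<Rightarrow> bool) \<Rightarrow> (nat \<Rightarrow> (nat \<Rightarrow> 'p) \<Rightarrow> 'a) \<Rightarrow> 'p set set
     \<Rightarrow> ('p set \<Rightarrow> nat \<Rightarrow> (nat \<Rightarrow> nat) \<Rightarrow> 'a) \<Rightarrow> nat \<Rightarrow> (nat \<Rightarrow> 'p) \<Rightarrow> 'a" where
  "ext_map F le g T H m \<sigma> = (if \<sigma> ` {0..m} \<in> F then g m \<sigma>
     else H (tauof T (\<sigma> ` {0..m})) m (iseq le (tauof T (\<sigma> ` {0..m})) m \<sigma>))"

lemma iseq_Delta:
  assumes po: "po_on Q le" and ch: "chain_on Q le \<tau>" and s: "\<sigma> \<in> ssimp (nerve Q le) m"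
    and sub: "\<sigma> ` {0..m} \<subseteq> \<tau>"
  shows "iseq le \<tau> m \<sigma> \<in> ssimp (Delta (card \<tau> - 1)) m"
  unfolding Delta_ssimp iseq_def
proof (intro conjI allI impI)
  fix i assume i: "i \<le> m"
  then have "\<sigma> i \<in> \<tau>" using sub by auto
  then show "(if i \<le> m then idx le \<tau> (\<sigma> i) else undefined) \<le> card \<tau> - 1"
    using idx_less[OF ch] i by fastforce
next
  fix i j assume ij: "i \<le> j" "j \<le> m"
  then have "\<sigma> i \<in> \<tau>" "\<sigma> j \<in> \<tau>" "le (\<sigma> i) (\<sigma> j)" using sub s unfolding nerve_ssimp by auto
  then show "(if i \<le> m then idx le \<tau> (\<sigma> i) else undefined) \<le> (if j \<le> m then idx le \<tau> (\<sigma> j) else undefined)"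
    using idx_mono[OF po ch] ij by auto
qed auto

lemma eseq_iseq:
  assumes po: "po_on Q le" and ch: "chain_on Q le \<tau>" and s: "\<sigma> \<in> ssimp (nerve Q le) m"
    and sub: "\<sigma> ` {0..m} \<subseteq> \<tau>"
  shows "eseq le \<tau> m (iseq le \<tau> m \<sigma>) = \<sigma>"
proof
  fix i show "eseq le \<tau> m (iseq le \<tau> m \<sigma>) i = \<sigma> i"
  proof (cases "i \<le> m")
    case True
    then have "\<sigma> i \<in> \<tau>" using sub by auto
    then show ?thesis using True enum_idx[OF po ch] unfolding eseq_def iseq_def by auto
  next
    case False then show ?thesis using s unfolding eseq_def nerve_ssimp by auto
  qed
qed

lemma iseq_horn:
  assumes po: "po_on Q le" and ch: "chain_on Q le \<tau>" and s: "\<sigma> \<in> ssimp (nerve Q le) m"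
    and sub: "\<sigma> ` {0..m} \<subseteq> \<tau>" and w: "w \<in> \<tau>" "w \<noteq> v" "w \<notin> \<sigma> ` {0..m}" and v: "v \<in> \<tau>"
  shows "iseq le \<tau> m \<sigma> \<in> ssimp (horn (card \<tau> - 1) (idx le \<tau> v)) m"
  unfolding horn_ssimp
proof (intro conjI)
  show "iseq le \<tau> m \<sigma> \<in> ssimp (Delta (card \<tau> - 1)) m" by (rule iseq_Delta[OF po ch s sub])
  have inj: "inj_on (idx le \<tau>) \<tau>" by (rule idx_inj[OF po ch])
  show "\<exists>j\<le>card \<tau> - 1. j \<noteq> idx le \<tau> v \<and> j \<notin> iseq le \<tau> m \<sigma> ` {0..m}"
  proof (intro exI conjI)
    show "idx le \<tau> w \<le> card \<tau> - 1" using idx_less[OF ch w(1)] by linarith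
    show "idx le \<tau> w \<noteq> idx le \<tau> v" using inj w v unfolding inj_on_def by blast
    show "idx le \<tau> w \<notin> iseq le \<tau> m \<sigma> ` {0..m}"
    proof
      assume "idx le \<tau> w \<in> iseq le \<tau> m \<sigma> ` {0..m}"
      then obtain i where i: "i \<le> m" "idx le \<tau> w = idx le \<tau> (\<sigma> i)" unfolding iseq_def by auto
      have "\<sigma> i \<in> \<tau>" using sub i by auto
      then have "w = \<sigma> i" using inj w i unfolding inj_on_def by blast
      then show False using w i by auto
    qed
  qed
qed

lemma iseq_smap:
  assumes th: "mono_map m n \<theta>"
  shows "iseq le \<tau> m (smap (nerve Q le) m n \<theta> \<sigma>) = smap (Delta d) m n \<theta> (iseq le \<tau> n \<sigma>)"
  unfolding iseq_def nerve_smap Delta_smap using mono_mapD[OF th] by (auto intro!: ext)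

lemma sim_ext:
  assumes po: "po_on Q le" and g: "ssmap (Sc Q le F) C g" and dc: "down_closed F"
    and Tch: "\<And>\<tau>. \<tau> \<in> T \<Longrightarrow> chain_on Q le \<tau>"
    and Tv: "\<And>\<tau>. \<tau> \<in> T \<Longrightarrow> v \<tau> \<in> \<tau>"
    and TF: "\<And>\<tau>. \<tau> \<in> T \<Longrightarrow> \<tau> \<notin> F"
    and TF2: "\<And>\<tau>. \<tau> \<in> T \<Longrightarrow> \<tau> - {v \<tau>} \<notin> F"
    and Tfaces: "\<And>\<tau> U. \<tau> \<in> T \<Longrightarrow> U \<subseteq> \<tau> \<Longrightarrow> U \<noteq> {} \<Longrightarrow> U \<noteq> \<tau> \<Longrightarrow> U \<noteq> \<tau> - {v \<tau>} \<Longrightarrow> U \<in> F"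
    and disj: "\<And>\<tau> \<tau>' U. \<tau> \<in> T \<Longrightarrow> \<tau>' \<in> T \<Longrightarrow> U \<subseteq> \<tau> \<Longrightarrow> U \<subseteq> \<tau>' \<Longrightarrow> U \<noteq> {} \<Longrightarrow> U \<notin> F \<Longrightarrow> \<tau> = \<tau>'"
    and Hs: "\<And>\<tau>. \<tau> \<in> T \<Longrightarrow> ssmap (Delta (card \<tau> - 1)) C (H \<tau>)"
    and He: "\<And>\<tau> m \<rho>. \<tau> \<in> T \<Longrightarrow> \<rho> \<in> ssimp (horn (card \<tau> - 1) (idx le \<tau> (v \<tau>))) m \<Longrightarrow> H \<tau> m \<rho> = g m (eseq le \<tau> m \<rho>)"
  shows "ssmap (Sc Q le (F \<union> {U. U \<noteq> {} \<and> (\<exists>\<tau>\<in>T. U \<subseteq> \<tau>)})) C (ext_map F le g T H)"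
proof -
  let ?F' = "F \<union> {U. U \<noteq> {} \<and> (\<exists>\<tau>\<in>T. U \<subseteq> \<tau>)}"
  have tau: "tauof T U = \<tau>" if "\<tau> \<in> T" "U \<subseteq> \<tau>" "U \<noteq> {}" "U \<notin> F" for \<tau> U
    unfolding tauof_def
  proof (rule the_equality)
    show "\<tau> \<in> T \<and> U \<subseteq> \<tau>" using that by auto
    fix \<tau>' assume "\<tau>' \<in> T \<and> U \<subseteq> \<tau>'"
    then show "\<tau>' = \<tau>" using disj[of \<tau>' \<tau> U] that by auto
  qed
  have new: "ext_map F le g T H m \<sigma> = H \<tau> m (iseq le \<tau> m \<sigma>)"
    if "\<tau> \<in> T" "\<sigma> ` {0..m} \<subseteq> \<tau>" "\<sigma> ` {0..m} \<notin> F" for \<tau> m \<sigma>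
  proof -
    have "\<sigma> ` {0..m} \<noteq> {}" by auto
    then show ?thesis unfolding ext_map_def using tau[OF that(1,2) _ that(3)] that(3) by simp
  qed
  have old: "ext_map F le g T H m \<sigma> = g m \<sigma>" if "\<sigma> ` {0..m} \<in> F" for m \<sigma>
    unfolding ext_map_def using that by simp
  have hornval: "H \<tau> m (iseq le \<tau> m \<sigma>) = g m \<sigma>"
    if t: "\<tau> \<in> T" and s: "\<sigma> \<in> ssimp (nerve Q le) m" and sub: "\<sigma> ` {0..m} \<subseteq> \<tau>" and inF: "\<sigma> ` {0..m} \<in> F"
    for \<tau> m \<sigma>
  proof -
    have "\<sigma> ` {0..m} \<noteq> \<tau>" "\<sigma> ` {0..m} \<noteq> \<tau> - {v \<tau>}" using TF[OF t] TF2[OF t] inF by auto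
    then obtain w where w: "w \<in> \<tau>" "w \<noteq> v \<tau>" "w \<notin> \<sigma> ` {0..m}" using sub by blast
    have "iseq le \<tau> m \<sigma> \<in> ssimp (horn (card \<tau> - 1) (idx le \<tau> (v \<tau>))) m"
      by (rule iseq_horn[OF po Tch[OF t] s sub w Tv[OF t]])
    then show ?thesis using He[OF t] eseq_iseq[OF po Tch[OF t] s sub] by simp
  qed
  show ?thesis unfolding ssmap_def
  proof (intro conjI allI impI)
    fix n \<sigma> assume s': "\<sigma> \<in> ssimp (Sc Q le ?F') n"
    then have s: "\<sigma> \<in> ssimp (nerve Q le) n" and sF: "\<sigma> ` {0..n} \<in> ?F'" by (simp_all add: Sc_ssimp)
    show "ext_map F le g T H n \<sigma> \<in> ssimp C n"
    proof (cases "\<sigma> ` {0..n} \<in> F")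
      case True
      then have "\<sigma> \<in> ssimp (Sc Q le F) n" using s by (simp add: Sc_ssimp)
      then show ?thesis using old[OF True] g unfolding ssmap_def by auto
    next
      case False
      then obtain \<tau> where t: "\<tau> \<in> T" "\<sigma> ` {0..n} \<subseteq> \<tau>" using sF by auto
      have "iseq le \<tau> n \<sigma> \<in> ssimp (Delta (card \<tau> - 1)) n" by (rule iseq_Delta[OF po Tch[OF t(1)] s t(2)])
      then show ?thesis using new[OF t False] Hs[OF t(1)] unfolding ssmap_def by auto
    qed
  next
    fix m n \<theta> \<sigma> assume th: "mono_map m n \<theta>" and s': "\<sigma> \<in> ssimp (Sc Q le ?F') n"
    then have s: "\<sigma> \<in> ssimp (nerve Q le) n" and sF: "\<sigma> ` {0..n} \<in> ?F'" by (simp_all add: Sc_ssimp)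
    have e: "smap (Sc Q le ?F') m n \<theta> \<sigma> = smap (nerve Q le) m n \<theta> \<sigma>" by (simp add: Sc_smap nerve_smap)
    let ?s = "smap (nerve Q le) m n \<theta> \<sigma>"
    have ss: "?s \<in> ssimp (nerve Q le) m" by (rule nerve_smap_in[OF s th])
    have simg: "?s ` {0..m} \<subseteq> \<sigma> ` {0..n}" by (rule nerve_smap_image[OF th])
    have sne: "?s ` {0..m} \<noteq> {}" by auto
    show "ext_map F le g T H m (smap (Sc Q le ?F') m n \<theta> \<sigma>) = smap C m n \<theta> (ext_map F le g T H n \<sigma>)"
      unfolding e
    proof (cases "\<sigma> ` {0..n} \<in> F")
      case True
      have sS: "\<sigma> \<in> ssimp (Sc Q le F) n" using s True by (simp add: Sc_ssimp)
      have "?s ` {0..m} \<in> F" by (rule dcD[OF dc True simg sne])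
      then have "ext_map F le g T H m ?s = g m ?s" by (rule old)
      also have "\<dots> = g m (smap (Sc Q le F) m n \<theta> \<sigma>)" by (simp add: Sc_smap nerve_smap)
      also have "\<dots> = smap C m n \<theta> (g n \<sigma>)" using g th sS unfolding ssmap_def by blast
      finally show "ext_map F le g T H m ?s = smap C m n \<theta> (ext_map F le g T H n \<sigma>)"
        using old[OF True] by simp
    next
      case False
      then obtain \<tau> where t: "\<tau> \<in> T" "\<sigma> ` {0..n} \<subseteq> \<tau>" using sF by auto
      have isD: "iseq le \<tau> n \<sigma> \<in> ssimp (Delta (card \<tau> - 1)) n" by (rule iseq_Delta[OF po Tch[OF t(1)] s t(2)])
      have ssub: "?s ` {0..m} \<subseteq> \<tau>" using simg t(2) by auto
      have "H \<tau> m (iseq le \<tau> m ?s) = H \<tau> m (smap (Delta (card \<tau> - 1)) m n \<theta> (iseq le \<tau> n \<sigma>))"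
        by (rule arg_cong[where f="H \<tau> m"], rule iseq_smap[OF th])
      also have "\<dots> = smap C m n \<theta> (H \<tau> n (iseq le \<tau> n \<sigma>))" using Hs[OF t(1)] th isD unfolding ssmap_def by blast
      also have "\<dots> = smap C m n \<theta> (ext_map F le g T H n \<sigma>)" using new[OF t False] by simp
      finally have main: "H \<tau> m (iseq le \<tau> m ?s) = smap C m n \<theta> (ext_map F le g T H n \<sigma>)" .
      show "ext_map F le g T H m ?s = smap C m n \<theta> (ext_map F le g T H n \<sigma>)"
      proof (cases "?s ` {0..m} \<in> F")
        case True
        then show ?thesis using old[OF True] hornval[OF t(1) ss ssub True] main by simp
      next
        case False
        then show ?thesis using new[OF t(1) ssub False] main by simp
      qed
    qed
  qed
qed

lemma ext_map_old: "\<sigma> ` {0..m} \<in> F \<Longrightarrow> ext_map F le g T H m \<sigma> = g m \<sigma>"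
  unfolding ext_map_def by simp

lemma ext_map_new:
  assumes disj: "\<And>\<tau> \<tau>' U. \<tau> \<in> T \<Longrightarrow> \<tau>' \<in> T \<Longrightarrow> U \<subseteq> \<tau> \<Longrightarrow> U \<subseteq> \<tau>' \<Longrightarrow> U \<noteq> {} \<Longrightarrow> U \<notin> F \<Longrightarrow> \<tau> = \<tau>'"
    and t: "\<tau> \<in> T" "\<sigma> ` {0..m} \<subseteq> \<tau>" "\<sigma> ` {0..m} \<notin> F"
  shows "ext_map F le g T H m \<sigma> = H \<tau> m (iseq le \<tau> m \<sigma>)"
proof -
  have "tauof T (\<sigma> ` {0..m}) = \<tau>"
    unfolding tauof_def
  proof (rule the_equality)
    show "\<tau> \<in> T \<and> \<sigma> ` {0..m} \<subseteq> \<tau>" using t by auto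
    fix \<tau>' assume "\<tau>' \<in> T \<and> \<sigma> ` {0..m} \<subseteq> \<tau>'"
    then show "\<tau>' = \<tau>" using disj[of \<tau>' \<tau> "\<sigma> ` {0..m}"] t by auto
  qed
  then show ?thesis unfolding ext_map_def using t(3) by simp
qed

lemma qc_fill:
  assumes qc: "quasicategory C" and h: "ssmap (horn d k) C h" and k: "0 < k" "k < d"
  shows "\<exists>H. ssmap (Delta d) C H \<and> (\<forall>m \<rho>. \<rho> \<in> ssimp (horn d k) m \<longrightarrow> H m \<rho> = h m \<rho>)"
  using qc h k unfolding quasicategory_def rlp_def by blast

lemma iterate:
  assumes po: "po_on Q le" and qc: "quasicategory C"
    and dc: "down_closed D"
    and Uch: "\<And>\<tau>. \<tau> \<in> Ucal \<Longrightarrow> chain_on Q le \<tau>" and finU: "finite Ucal"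
    and vin: "\<And>\<tau>. \<tau> \<in> Ucal \<Longrightarrow> v \<tau> \<in> \<tau>"
    and inner: "\<And>\<tau>. \<tau> \<in> Ucal \<Longrightarrow> 0 < idx le \<tau> (v \<tau>) \<and> idx le \<tau> (v \<tau>) < card \<tau> - 1"
    and nD: "\<And>\<tau>. \<tau> \<in> Ucal \<Longrightarrow> \<tau> \<notin> D"
    and nD2: "\<And>\<tau>. \<tau> \<in> Ucal \<Longrightarrow> \<tau> - {v \<tau>} \<notin> D"
    and faces: "\<And>\<tau> w. \<tau> \<in> Ucal \<Longrightarrow> w \<in> \<tau> \<Longrightarrow> w \<noteq> v \<tau> \<Longrightarrow>
        \<tau> - {w} \<in> D \<or> (\<exists>\<tau>'\<in>Ucal. r \<tau>' < r \<tau> \<and> \<tau> - {w} \<subseteq> \<tau>')"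
    and F5: "\<And>\<tau> \<tau>'. \<tau> \<in> Ucal \<Longrightarrow> \<tau>' \<in> Ucal \<Longrightarrow> \<tau> - {v \<tau>} \<subseteq> \<tau>' \<Longrightarrow> \<tau>' \<noteq> \<tau> \<Longrightarrow> r \<tau> < r \<tau>'"
    and F6: "\<And>\<tau> \<tau>'. \<tau> \<in> Ucal \<Longrightarrow> \<tau>' \<in> Ucal \<Longrightarrow> \<tau> \<subseteq> \<tau>' \<Longrightarrow> \<tau> \<noteq> \<tau>' \<Longrightarrow> r \<tau> < (r \<tau>' :: nat)"
    and g0: "ssmap (Sc Q le D) C g0"
  shows "\<exists>g. ssmap (Sc Q le (D \<union> {U. U \<noteq> {} \<and> (\<exists>\<tau>\<in>Ucal. U \<subseteq> \<tau>)})) C g \<and>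
      (\<forall>m \<sigma>. \<sigma> \<in> ssimp (Sc Q le D) m \<longrightarrow> g m \<sigma> = g0 m \<sigma>)"
proof -
  define FN where "FN N = D \<union> {U. U \<noteq> {} \<and> (\<exists>\<tau>\<in>Ucal. r \<tau> < N \<and> U \<subseteq> \<tau>)}" for N
  have dcN: "down_closed (FN N)" for N
    unfolding down_closed_def
  proof (intro ballI allI impI)
    fix U V assume U: "U \<in> FN N" and V: "V \<subseteq> U" "V \<noteq> {}"
    show "V \<in> FN N"
    proof (cases "U \<in> D")
      case True then show ?thesis using dcD[OF dc True V] unfolding FN_def by blast
    next
      case False
      then obtain \<tau> where "\<tau> \<in> Ucal" "r \<tau> < N" "U \<subseteq> \<tau>" using U unfolding FN_def by blast
      then show ?thesis using V unfolding FN_def by blast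
    qed
  qed
  have DN: "D \<subseteq> FN N" for N unfolding FN_def by blast
  have step: "\<exists>g. ssmap (Sc Q le (FN N)) C g \<and> (\<forall>m \<sigma>. \<sigma> \<in> ssimp (Sc Q le D) m \<longrightarrow> g m \<sigma> = g0 m \<sigma>)" for N
  proof (induction N)
    case 0
    have "FN 0 = D" unfolding FN_def by auto
    then show ?case using g0 by auto
  next
    case (Suc N)
    then obtain g where g: "ssmap (Sc Q le (FN N)) C g" and gD: "\<forall>m \<sigma>. \<sigma> \<in> ssimp (Sc Q le D) m \<longrightarrow> g m \<sigma> = g0 m \<sigma>"
      by blast
    define T where "T = {\<tau>\<in>Ucal. r \<tau> = N}"
    have facesN: "U \<in> FN N" if t: "\<tau> \<in> T" and U: "U \<subseteq> \<tau>" "U \<noteq> {}" and w: "w \<in> \<tau>" "w \<noteq> v \<tau>" "w \<notin> U" for \<tau> U w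
    proof -
      have t': "\<tau> \<in> Ucal" "r \<tau> = N" using t unfolding T_def by auto
      have Uw: "U \<subseteq> \<tau> - {w}" using U w by auto
      from faces[OF t'(1) w(1,2)] show ?thesis
      proof
        assume "\<tau> - {w} \<in> D" then show ?thesis using dcD[OF dc _ Uw U(2)] DN by blast
      next
        assume "\<exists>\<tau>'\<in>Ucal. r \<tau>' < r \<tau> \<and> \<tau> - {w} \<subseteq> \<tau>'"
        then obtain \<tau>' where "\<tau>' \<in> Ucal" "r \<tau>' < N" "\<tau> - {w} \<subseteq> \<tau>'" using t' by auto
        then show ?thesis using Uw U(2) unfolding FN_def by blast
      qed
    qed
    have notF: "\<tau> \<notin> FN N" if t: "\<tau> \<in> T" for \<tau>
    proof
      assume "\<tau> \<in> FN N"
      moreover have t': "\<tau> \<in> Ucal" "r \<tau> = N" using t unfolding T_def by auto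
      ultimately obtain \<tau>' where "\<tau>' \<in> Ucal" "r \<tau>' < N" "\<tau> \<subseteq> \<tau>'" using nD unfolding FN_def by blast
      then show False using F6[OF t'(1)] t' by (metis less_not_refl order.asym)
    qed
    have notF2: "\<tau> - {v \<tau>} \<notin> FN N" if t: "\<tau> \<in> T" for \<tau>
    proof
      assume "\<tau> - {v \<tau>} \<in> FN N"
      moreover have t': "\<tau> \<in> Ucal" "r \<tau> = N" using t unfolding T_def by auto
      ultimately obtain \<tau>' where "\<tau>' \<in> Ucal" "r \<tau>' < N" "\<tau> - {v \<tau>} \<subseteq> \<tau>'" using nD2 unfolding FN_def by blast
      then show False using F5[OF t'(1)] t' by (metis less_not_refl order.asym)
    qed
    have Tfaces: "U \<in> FN N" if t: "\<tau> \<in> T" and U: "U \<subseteq> \<tau>" "U \<noteq> {}" "U \<noteq> \<tau>" "U \<noteq> \<tau> - {v \<tau>}" for \<tau> U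
    proof -
      obtain w where "w \<in> \<tau>" "w \<noteq> v \<tau>" "w \<notin> U" using U by blast
      then show ?thesis using facesN[OF t U(1,2)] by blast
    qed
    have Tv: "v \<tau> \<in> \<tau>" if "\<tau> \<in> T" for \<tau> using vin that unfolding T_def by auto
    have Tch: "chain_on Q le \<tau>" if "\<tau> \<in> T" for \<tau> using Uch that unfolding T_def by auto
    have disj: "\<tau> = \<tau>'" if t: "\<tau> \<in> T" "\<tau>' \<in> T" and U: "U \<subseteq> \<tau>" "U \<subseteq> \<tau>'" "U \<noteq> {}" "U \<notin> FN N" for \<tau> \<tau>' U
    proof -
      have t': "\<tau> \<in> Ucal" "r \<tau> = N" "\<tau>' \<in> Ucal" "r \<tau>' = N" using t unfolding T_def by auto
      have c1: "U = \<tau> \<or> U = \<tau> - {v \<tau>}" using Tfaces[OF t(1) U(1,3)] U(4) by blast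
      have c2: "U = \<tau>' \<or> U = \<tau>' - {v \<tau>'}" using Tfaces[OF t(2) U(2,3)] U(4) by blast
      show ?thesis
      proof (rule ccontr)
        assume ne: "\<tau> \<noteq> \<tau>'"
        from c1 show False
        proof
          assume "U = \<tau>"
          then have "\<tau> \<subseteq> \<tau>'" using U by auto
          then show False using F6[OF t'(1,3) _ ne] t' by auto
        next
          assume "U = \<tau> - {v \<tau>}"
          then have "\<tau> - {v \<tau>} \<subseteq> \<tau>'" using U by auto
          then show False using F5[OF t'(1,3)] ne t' by auto
        qed
      qed
    qed
    have hm: "ssmap (horn (card \<tau> - 1) (idx le \<tau> (v \<tau>))) C (\<lambda>m \<rho>. g m (eseq le \<tau> m \<rho>))" if t: "\<tau> \<in> T" for \<tau>
      by (rule horn_map[OF po g dcN Tch[OF t] Tv[OF t]]) (use facesN[OF t] in blast)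
    define H where "H \<tau> = (SOME H. ssmap (Delta (card \<tau> - 1)) C H \<and>
        (\<forall>m \<rho>. \<rho> \<in> ssimp (horn (card \<tau> - 1) (idx le \<tau> (v \<tau>))) m \<longrightarrow> H m \<rho> = g m (eseq le \<tau> m \<rho>)))" for \<tau>
    have Hprop: "ssmap (Delta (card \<tau> - 1)) C (H \<tau>) \<and>
        (\<forall>m \<rho>. \<rho> \<in> ssimp (horn (card \<tau> - 1) (idx le \<tau> (v \<tau>))) m \<longrightarrow> H \<tau> m \<rho> = g m (eseq le \<tau> m \<rho>))"
      if t: "\<tau> \<in> T" for \<tau>
    proof -
      have "0 < idx le \<tau> (v \<tau>)" "idx le \<tau> (v \<tau>) < card \<tau> - 1" using inner t unfolding T_def by auto
      from qc_fill[OF qc hm[OF t] this] show ?thesis unfolding H_def by (rule someI_ex)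
    qed
    have se: "ssmap (Sc Q le (FN N \<union> {U. U \<noteq> {} \<and> (\<exists>\<tau>\<in>T. U \<subseteq> \<tau>)})) C (ext_map (FN N) le g T H)"
      by (rule sim_ext[OF po g dcN Tch Tv notF notF2 Tfaces disj]) (use Hprop in auto)
    have eq: "FN N \<union> {U. U \<noteq> {} \<and> (\<exists>\<tau>\<in>T. U \<subseteq> \<tau>)} = FN (Suc N)"
      unfolding FN_def T_def by (auto simp: less_Suc_eq)
    have agree: "ext_map (FN N) le g T H m \<sigma> = g0 m \<sigma>" if "\<sigma> \<in> ssimp (Sc Q le D) m" for m \<sigma>
    proof -
      have "\<sigma> ` {0..m} \<in> FN N" using that DN by (auto simp: Sc_ssimp)
      then show ?thesis using ext_map_old gD that by metis
    qed
    show ?case using se agree unfolding eq by blast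
  qed
  define N0 where "N0 = Suc (\<Sum>\<tau>\<in>Ucal. r \<tau>)"
  have "r \<tau> < N0" if "\<tau> \<in> Ucal" for \<tau>
    using member_le_sum[of \<tau> Ucal r] that finU unfolding N0_def by auto
  then have "FN N0 = D \<union> {U. U \<noteq> {} \<and> (\<exists>\<tau>\<in>Ucal. U \<subseteq> \<tau>)}" unfolding FN_def by blast
  then show ?thesis using step[of N0] by simp
qed



definition leL :: "nat set \<times> nat \<Rightarrow> nat set \<times> nat \<Rightarrow> bool" where
  "leL x y \<longleftrightarrow> fst x \<subseteq> fst y \<and> snd x \<le> snd y"

definition leT :: "bool \<Rightarrow> nat set \<times> nat \<Rightarrow> nat set \<times> nat \<Rightarrow> bool" where
  "leT rv x y = (if rv then leL y x else leL x y)"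

definition TT :: "nat \<Rightarrow> nat \<Rightarrow> (nat set \<times> nat) set" where
  "TT n k = {x. fst x \<in> subsets_with n k \<and> snd x \<le> 1 \<and> x \<noteq> ({0..n}, 0)}"

abbreviation topT :: "nat \<Rightarrow> nat set \<times> nat" where
  "topT n \<equiv> ({0..n}, 1)"

definition DD :: "nat \<Rightarrow> nat \<Rightarrow> (nat set \<times> nat) set set" where
  "DD n k = {U. chain_on (TT n k) leL U \<and> (topT n \<notin> U \<or> (\<forall>x\<in>U. snd x = 1))}"

definition UU :: "nat \<Rightarrow> nat \<Rightarrow> (nat set \<times> nat) set set" where
  "UU n k = {U. chain_on (TT n k) leL U \<and> topT n \<in> U \<and> (\<exists>A. (A, 0) \<in> U \<and> (A, 1) \<in> U)}"

definition vv :: "(nat set \<times> nat) set \<Rightarrow> nat set \<times> nat" where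
  "vv U = (SOME x. \<exists>A. x = (A, 1) \<and> (A, 0) \<in> U \<and> (A, 1) \<in> U)"

definition rr :: "(nat set \<times> nat) set \<Rightarrow> nat" where
  "rr U = card U * card U + card {x\<in>U. snd x = 0}"

lemma chain_leT: "chain_on Q (leT rv) U \<longleftrightarrow> chain_on Q leL U"
  unfolding chain_on_def leT_def by auto

lemma po_leL: "po_on Q leL"
  unfolding po_on_def
proof (intro conjI ballI impI)
  fix x y assume "leL x y" "leL y x"
  then show "x = y" unfolding leL_def by (intro prod_eqI) auto
next
  fix x y z assume "leL x y" "leL y z"
  then show "leL x z" unfolding leL_def by auto
qed (auto simp: leL_def)

lemma po_leT: "po_on Q (leT rv)"
  unfolding po_on_def
proof (intro conjI ballI impI)
  fix x y assume "leT rv x y" "leT rv y x"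
  then have "leL x y" "leL y x" unfolding leT_def by (cases rv; simp)+
  then show "x = y" unfolding leL_def by (intro prod_eqI) auto
next
  fix x y z assume "leT rv x y" "leT rv y z"
  then show "leT rv x z" unfolding leT_def leL_def by (cases rv) auto
qed (auto simp: leT_def leL_def)

lemma TT_iff: "x \<in> TT n k \<longleftrightarrow> fst x \<subseteq> {0..n} \<and> k \<in> fst x \<and> snd x \<le> 1 \<and> x \<noteq> ({0..n}, 0)"
  unfolding TT_def subsets_with_def by auto

lemma top_TT: "k \<le> n \<Longrightarrow> topT n \<in> TT n k"
  unfolding TT_iff by auto

lemma finite_TT: "finite (TT n k)"
proof -
  have "TT n k \<subseteq> Pow {0..n} \<times> {0..1}"
  proof
    fix x assume "x \<in> TT n k" then show "x \<in> Pow {0..n} \<times> {0..1}" unfolding TT_iff by (cases x) auto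
  qed
  then show ?thesis by (rule finite_subset) auto
qed

lemma chainD: "chain_on Q le U \<Longrightarrow> x \<in> U \<Longrightarrow> y \<in> U \<Longrightarrow> le x y \<or> le y x"
  unfolding chain_on_def by blast

lemma pair_unique:
  assumes ch: "chain_on Q leL U" and "(A, 0) \<in> U" "(A, 1) \<in> U" "(B, 0) \<in> U" "(B, 1) \<in> U"
  shows "A = B"
proof -
  have "leL (A, 0) (B, 1) \<or> leL (B, 1) (A, 0)" using chainD[OF ch] assms by blast
  then have "A \<subseteq> B" unfolding leL_def by auto
  moreover have "leL (B, 0) (A, 1) \<or> leL (A, 1) (B, 0)" using chainD[OF ch] assms by blast
  then have "B \<subseteq> A" unfolding leL_def by auto
  ultimately show ?thesis by auto
qed

lemma vv_eq:
  assumes ch: "chain_on Q leL U" and A: "(A, 0) \<in> U" "(A, 1) \<in> U"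
  shows "vv U = (A, 1)"
proof -
  have "\<exists>B. vv U = (B, 1) \<and> (B, 0) \<in> U \<and> (B, 1) \<in> U"
    unfolding vv_def by (rule someI_ex) (use A in blast)
  then obtain B where "vv U = (B, 1)" "(B, 0) \<in> U" "(B, 1) \<in> U" by blast
  then show ?thesis using pair_unique[OF ch A] by auto
qed

lemma chain_in: "chain_on Q le U \<Longrightarrow> x \<in> U \<Longrightarrow> x \<in> Q"
  unfolding chain_on_def by blast

lemma chain_fin: "chain_on Q le U \<Longrightarrow> finite U"
  unfolding chain_on_def by blast

lemma lev0_not_top: "(A, 0) \<in> TT n k \<Longrightarrow> A \<noteq> {0..n}"
  unfolding TT_iff by auto

lemma TT_snd: "x \<in> TT n k \<Longrightarrow> snd x = 0 \<or> snd x = 1"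
  unfolding TT_iff by auto

lemma TT_sub: "x \<in> TT n k \<Longrightarrow> fst x \<subseteq> {0..n}"
  unfolding TT_iff by auto

lemma UU_D:
  assumes "\<tau> \<in> UU n k"
  obtains A where "chain_on (TT n k) leL \<tau>" "topT n \<in> \<tau>" "(A, 0) \<in> \<tau>" "(A, 1) \<in> \<tau>" "vv \<tau> = (A, 1)"
    "A \<noteq> {0..n}" "(A, 1) \<noteq> topT n"
proof -
  obtain A where A: "chain_on (TT n k) leL \<tau>" "topT n \<in> \<tau>" "(A, 0) \<in> \<tau>" "(A, 1) \<in> \<tau>"
    using assms unfolding UU_def by blast
  have "A \<noteq> {0..n}" using lev0_not_top chain_in[OF A(1) A(3)] by blast
  then show ?thesis using that A vv_eq[OF A(1) A(3,4)] by auto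
qed

lemma UU_card3: "\<tau> \<in> UU n k \<Longrightarrow> 3 \<le> card \<tau>"
proof -
  assume t: "\<tau> \<in> UU n k"
  then obtain A where A: "chain_on (TT n k) leL \<tau>" "topT n \<in> \<tau>" "(A, 0) \<in> \<tau>" "(A, 1) \<in> \<tau>"
    "(A, 1) \<noteq> topT n" by (rule UU_D)
  have "card {(A, 0), (A, 1), topT n} = 3" using A(5) by auto
  moreover have "card {(A, 0), (A, 1), topT n} \<le> card \<tau>"
    using A chain_fin[OF A(1)] by (intro card_mono) auto
  ultimately show ?thesis by simp
qed

lemma UU_notDD: "\<tau> \<in> UU n k \<Longrightarrow> \<tau> \<notin> DD n k"
  unfolding UU_def DD_def by force

lemma UU_notDD2: "\<tau> \<in> UU n k \<Longrightarrow> \<tau> - {vv \<tau>} \<notin> DD n k"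
proof
  assume t: "\<tau> \<in> UU n k" and d: "\<tau> - {vv \<tau>} \<in> DD n k"
  obtain A where A: "topT n \<in> \<tau>" "(A, 0) \<in> \<tau>" "vv \<tau> = (A, 1)" "(A, 1) \<noteq> topT n"
    using t by (rule UU_D) auto
  have "topT n \<in> \<tau> - {vv \<tau>}" "(A, 0) \<in> \<tau> - {vv \<tau>}" using A by auto
  then show False using d unfolding DD_def by force
qed

lemma UU_minus_not_UU: "\<tau> \<in> UU n k \<Longrightarrow> \<tau> - {vv \<tau>} \<notin> UU n k"
proof
  assume t: "\<tau> \<in> UU n k" and u: "\<tau> - {vv \<tau>} \<in> UU n k"
  obtain A where A: "chain_on (TT n k) leL \<tau>" "(A, 0) \<in> \<tau>" "(A, 1) \<in> \<tau>" "vv \<tau> = (A, 1)"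
    using t by (rule UU_D) auto
  obtain B where B: "(B, 0) \<in> \<tau> - {vv \<tau>}" "(B, 1) \<in> \<tau> - {vv \<tau>}" using u unfolding UU_def by blast
  have "A = B" using pair_unique[OF A(1) A(2,3)] B by auto
  then show False using B A by auto
qed

lemma DD_down: "down_closed (DD n k)"
  unfolding down_closed_def DD_def
proof (intro ballI allI impI)
  fix U V assume U: "U \<in> {U. chain_on (TT n k) leL U \<and> (topT n \<notin> U \<or> (\<forall>x\<in>U. snd x = 1))}"
    and V: "V \<subseteq> U" "V \<noteq> {}"
  then have "chain_on (TT n k) leL V" using chain_sub by blast
  then show "V \<in> {U. chain_on (TT n k) leL U \<and> (topT n \<notin> U \<or> (\<forall>x\<in>U. snd x = 1))}"
    using U V by auto
qed

lemma cover:
  assumes ch: "chain_on (TT n k) leL U" and nd: "U \<notin> DD n k"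
  shows "\<exists>\<tau>. \<tau> \<in> UU n k \<and> U \<subseteq> \<tau> \<and> (\<tau> = U \<or> (\<exists>B. (B, 1) \<noteq> topT n \<and> \<tau> = insert (B, 1) U))"
proof -
  have topU: "topT n \<in> U" and ex0: "\<exists>x\<in>U. snd x \<noteq> 1" using nd ch unfolding DD_def by auto
  show ?thesis
  proof (cases "\<exists>A. (A, 0) \<in> U \<and> (A, 1) \<in> U")
    case True
    then show ?thesis using ch topU unfolding UU_def by blast
  next
    case False
    define L0 where "L0 = {x\<in>U. snd x = 0}"
    have finU: "finite U" using chain_fin[OF ch] .
    have L0ne: "L0 \<noteq> {}" using ex0 TT_snd chain_in[OF ch] unfolding L0_def by blast
    have finL0: "finite L0" using finU unfolding L0_def by auto
    define M where "M = Max ((\<lambda>x. card (fst x)) ` L0)"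
    have "M \<in> (\<lambda>x. card (fst x)) ` L0" unfolding M_def using finL0 L0ne by (intro Max_in) auto
    then obtain x0 where x0a: "x0 \<in> L0" "card (fst x0) = M" by blast
    have "\<forall>y\<in>L0. card (fst y) \<le> card (fst x0)"
    proof
      fix y assume "y \<in> L0"
      then have "card (fst y) \<le> M" unfolding M_def using finL0 by (intro Max_ge) auto
      then show "card (fst y) \<le> card (fst x0)" using x0a by simp
    qed
    note x0 = x0a(1) this
    define A where "A = fst x0"
    have x0eq: "x0 = (A, 0)" using x0(1) unfolding L0_def A_def by (cases x0) auto
    have A0: "(A, 0) \<in> U" using x0(1) x0eq unfolding L0_def by auto
    have A0T: "(A, 0) \<in> TT n k" using chain_in[OF ch A0] .
    have Asub: "A \<subseteq> {0..n}" using TT_sub[OF A0T] by simp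
    have Aneq: "A \<noteq> {0..n}" using lev0_not_top[OF A0T] .
    have A1T: "(A, 1) \<in> TT n k" using A0T unfolding TT_iff by auto
    have maxA: "B \<subseteq> A" if "(B, 0) \<in> U" for B
    proof -
      have "leL (A, 0) (B, 0) \<or> leL (B, 0) (A, 0)" using chainD[OF ch A0 that] .
      then show ?thesis
      proof
        assume "leL (A, 0) (B, 0)"
        then have AB: "A \<subseteq> B" unfolding leL_def by auto
        have "(B, 0) \<in> L0" using that unfolding L0_def by auto
        then have "card B \<le> card A" using x0(2) x0eq by force
        moreover have "finite B" using TT_sub[OF chain_in[OF ch that]] by (auto intro: finite_subset)
        moreover have "card A \<le> card B" using card_mono[OF \<open>finite B\<close> AB] .
        ultimately have "A = B" using card_subset_eq[OF \<open>finite B\<close> AB] by simp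
        then show ?thesis by simp
      qed (auto simp: leL_def)
    qed
    have abv: "A \<subseteq> B" if "(B, 1) \<in> U" for B
    proof -
      have "leL (A, 0) (B, 1) \<or> leL (B, 1) (A, 0)" using chainD[OF ch A0 that] .
      then show ?thesis unfolding leL_def by auto
    qed
    have ch': "chain_on (TT n k) leL (insert (A, 1) U)"
      unfolding chain_on_def
    proof (intro conjI ballI)
      show "insert (A, 1) U \<subseteq> TT n k" using A1T ch unfolding chain_on_def by auto
      show "finite (insert (A, 1) U)" using finU by auto
      fix x y assume xy: "x \<in> insert (A, 1) U" "y \<in> insert (A, 1) U"
      have cmp: "leL (A, 1) z \<or> leL z (A, 1)" if z: "z \<in> U" for z
      proof -
        have "snd z = 0 \<or> snd z = 1" using TT_snd chain_in[OF ch z] by blast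
        then show ?thesis
        proof
          assume "snd z = 0"
          then have "z = (fst z, 0)" by (cases z) auto
          then have "fst z \<subseteq> A" using maxA z by (metis)
          then show ?thesis using \<open>snd z = 0\<close> unfolding leL_def by auto
        next
          assume "snd z = 1"
          then have "z = (fst z, 1)" by (cases z) auto
          then have "A \<subseteq> fst z" using abv z by metis
          then show ?thesis using \<open>snd z = 1\<close> unfolding leL_def by auto
        qed
      qed
      show "leL x y \<or> leL y x"
      proof (cases "x = (A, 1)")
        case True
        show ?thesis
        proof (cases "y = (A, 1)")
          case True then show ?thesis using \<open>x = (A, 1)\<close> by (simp add: leL_def)
        next
          case False then have "y \<in> U" using xy by simp
          then show ?thesis using cmp \<open>x = (A, 1)\<close> by blast
        qed
      next
        case False
        then have xU: "x \<in> U" using xy by simp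
        show ?thesis
        proof (cases "y = (A, 1)")
          case True then show ?thesis using cmp xU by blast
        next
          case False then have "y \<in> U" using xy by simp
          then show ?thesis using chainD[OF ch xU] by blast
        qed
      qed
    qed auto
    have "insert (A, 1) U \<in> UU n k" using ch' topU A0 unfolding UU_def by auto
    moreover have "(A, 1) \<noteq> topT n" using Aneq by auto
    ultimately show ?thesis by blast
  qed
qed

lemma rr_lt_card:
  assumes fin: "finite \<tau>" and c: "card \<tau> < card \<tau>'"
  shows "rr \<tau> < rr \<tau>'"
proof -
  have l: "card {x\<in>\<tau>. snd x = 0} \<le> card \<tau>" using fin by (intro card_mono) auto
  have "Suc (card \<tau>) \<le> card \<tau>'" using c by simp
  then have "Suc (card \<tau>) * Suc (card \<tau>) \<le> card \<tau>' * card \<tau>'" by (intro mult_le_mono) auto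
  then show ?thesis unfolding rr_def using l by simp
qed

lemma F6:
  assumes "\<tau> \<in> UU n k" "\<tau>' \<in> UU n k" "\<tau> \<subseteq> \<tau>'" "\<tau> \<noteq> \<tau>'"
  shows "rr \<tau> < rr \<tau>'"
proof -
  have f: "finite \<tau>'" "finite \<tau>" using assms unfolding UU_def chain_on_def by auto
  have "card \<tau> < card \<tau>'" using assms f by (intro psubset_card_mono) auto
  then show ?thesis using rr_lt_card f by blast
qed


lemma F4:
  assumes t: "\<tau> \<in> UU n k" and w: "w \<in> \<tau>" "w \<noteq> vv \<tau>"
  shows "\<tau> - {w} \<in> DD n k \<or> (\<exists>\<tau>'\<in>UU n k. rr \<tau>' < rr \<tau> \<and> \<tau> - {w} \<subseteq> \<tau>')"
proof -
  obtain A where A: "chain_on (TT n k) leL \<tau>" "topT n \<in> \<tau>" "(A, 0) \<in> \<tau>" "(A, 1) \<in> \<tau>" "vv \<tau> = (A, 1)"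
    "(A, 1) \<noteq> topT n" using t by (rule UU_D)
  have fin: "finite \<tau>" using chain_fin[OF A(1)] .
  have ne: "\<tau> - {w} \<noteq> {}" using A w by auto
  have chw: "chain_on (TT n k) leL (\<tau> - {w})" using chain_sub[OF A(1) _ ne] by auto
  have cw: "card (\<tau> - {w}) = card \<tau> - 1" using fin w by simp
  have cpos: "card \<tau> > 0" using fin w by (auto simp: card_gt_0_iff)
  show ?thesis
  proof (cases "w = topT n")
    case True
    then show ?thesis using chw unfolding DD_def by auto
  next
    case wt: False
    show ?thesis
    proof (cases "w = (A, 0)")
      case True
      show ?thesis
      proof (cases "\<tau> - {w} \<in> DD n k")
        case True then show ?thesis by blast
      next
        case False
        from cover[OF chw False] obtain \<tau>' where t': "\<tau>' \<in> UU n k" "\<tau> - {w} \<subseteq> \<tau>'"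
          and form: "\<tau>' = \<tau> - {w} \<or> (\<exists>B. (B, 1) \<noteq> topT n \<and> \<tau>' = insert (B, 1) (\<tau> - {w}))" by blast
        have "\<tau>' \<noteq> \<tau> - {w}"
        proof
          assume e: "\<tau>' = \<tau> - {w}"
          obtain B where "(B, 0) \<in> \<tau>'" "(B, 1) \<in> \<tau>'" using t'(1) unfolding UU_def by blast
          then have "(B, 0) \<in> \<tau>" "(B, 1) \<in> \<tau>" "(B, 0) \<noteq> (A, 0)" using e True by auto
          then show False using pair_unique[OF A(1) A(3,4)] by auto
        qed
        then obtain B where B: "\<tau>' = insert (B, 1) (\<tau> - {w})" using form by blast
        have l0: "{x\<in>\<tau>'. snd x = 0} = {x\<in>\<tau>. snd x = 0} - {(A, 0)}" unfolding B using True by auto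
        have finl: "finite {x\<in>\<tau>. snd x = 0}" using fin by auto
        have l0c: "card {x\<in>\<tau>'. snd x = 0} < card {x\<in>\<tau>. snd x = 0}"
          unfolding l0 using finl A(3) by (intro card_Diff1_less) auto
        have "card \<tau>' \<le> card \<tau>" unfolding B using fin cw cpos
          by (metis Suc_pred' card_insert_if finite_Diff le_SucI order_refl)
        then show ?thesis
        proof (cases "card \<tau>' < card \<tau>")
          case True then show ?thesis using rr_lt_card[OF _ True] t' by (meson finite_subset UU_D chain_fin)
        next
          case False
          then have "card \<tau>' = card \<tau>" using \<open>card \<tau>' \<le> card \<tau>\<close> by simp
          then have "rr \<tau>' < rr \<tau>" unfolding rr_def using l0c by simp
          then show ?thesis using t' by blast
        qed
      qed
    next
      case wA: False
      have "w \<noteq> (A, 1)" using w A by auto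
      then have "\<tau> - {w} \<in> UU n k" using chw A wA wt unfolding UU_def by auto
      moreover have "rr (\<tau> - {w}) < rr \<tau>" using rr_lt_card[of "\<tau> - {w}" \<tau>] fin cw cpos by simp
      ultimately show ?thesis by blast
    qed
  qed
qed

lemma F5:
  assumes t: "\<tau> \<in> UU n k" and t': "\<tau>' \<in> UU n k" and sub: "\<tau> - {vv \<tau>} \<subseteq> \<tau>'" and ne: "\<tau>' \<noteq> \<tau>"
  shows "rr \<tau> < rr \<tau>'"
proof -
  obtain A where A: "chain_on (TT n k) leL \<tau>" "topT n \<in> \<tau>" "(A, 0) \<in> \<tau>" "(A, 1) \<in> \<tau>" "vv \<tau> = (A, 1)"
    "(A, 1) \<noteq> topT n" using t by (rule UU_D)
  have ch': "chain_on (TT n k) leL \<tau>'" using t' unfolding UU_def by auto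
  have fin: "finite \<tau>" "finite \<tau>'" using chain_fin A(1) ch' by auto
  let ?R = "\<tau> - {(A, 1)}"
  have sub': "?R \<subseteq> \<tau>'" using sub A by simp
  have cR: "card ?R = card \<tau> - 1" using fin A by simp
  have cpos: "card \<tau> > 0" using fin A by (auto simp: card_gt_0_iff)
  have cRle: "card ?R \<le> card \<tau>'" using card_mono[OF fin(2) sub'] .
  consider "card \<tau> < card \<tau>'" | "card \<tau>' < card \<tau>" | "card \<tau>' = card \<tau>" by linarith
  then show ?thesis
  proof cases
    case 1 then show ?thesis using rr_lt_card fin by blast
  next
    case 2
    then have "card \<tau>' = card ?R" using cR cRle by simp
    then have "?R = \<tau>'" using card_subset_eq[OF fin(2) sub'] by simp
    then show ?thesis using UU_minus_not_UU[OF t] t' A by simp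
  next
    case 3
    have "\<not> \<tau>' \<subseteq> ?R"
    proof
      assume "\<tau>' \<subseteq> ?R"
      then have "card \<tau>' \<le> card ?R" using fin by (intro card_mono) auto
      then show False using 3 cR cpos by simp
    qed
    then obtain x where x: "x \<in> \<tau>'" "x \<notin> ?R" by blast
    have ins: "insert x ?R = \<tau>'"
    proof (rule card_subset_eq[OF fin(2)])
      show "insert x ?R \<subseteq> \<tau>'" using x sub' by auto
      show "card (insert x ?R) = card \<tau>'" using x fin 3 cR cpos by simp
    qed
    have xv: "x \<noteq> (A, 1)" using ins ne A by auto
    have xnt: "x \<notin> \<tau>" using x xv by auto
    have "snd x = 0 \<or> snd x = 1" using TT_snd chain_in[OF ch' x(1)] by blast
    then show ?thesis
    proof
      assume x0: "snd x = 0"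
      have "{y\<in>\<tau>'. snd y = 0} = insert x {y\<in>\<tau>. snd y = 0}" unfolding ins[symmetric] using x0 by auto
      then have "card {y\<in>\<tau>'. snd y = 0} = Suc (card {y\<in>\<tau>. snd y = 0})" using xnt fin by simp
      then show ?thesis unfolding rr_def using 3 by simp
    next
      assume x1: "snd x = 1"
      obtain X where xX: "x = (X, 1)" using x1 by (cases x) auto
      obtain B where B: "(B, 0) \<in> \<tau>'" "(B, 1) \<in> \<tau>'" using t' unfolding UU_def by blast
      have "(B, 1) = x"
      proof (rule ccontr)
        assume nx: "(B, 1) \<noteq> x"
        have "(B, 0) \<noteq> x" using x1 by auto
        then have "(B, 0) \<in> ?R" "(B, 1) \<in> ?R" using B nx ins by auto
        then have "B = A" using pair_unique[OF A(1) A(3,4)] by auto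
        then show False using \<open>(B, 1) \<in> ?R\<close> by simp
      qed
      then have BX: "B = X" using xX by simp
      have X0: "(X, 0) \<in> \<tau>" using B(1) BX ins xX by auto
      have "leL (X, 0) (A, 1) \<or> leL (A, 1) (X, 0)" using chainD[OF A(1) X0 A(4)] .
      then have "X \<subseteq> A" unfolding leL_def by auto
      moreover have "(A, 0) \<in> \<tau>'" using sub' A(3) by auto
      then have "leL (A, 0) (X, 1) \<or> leL (X, 1) (A, 0)" using chainD[OF ch' _ x(1)] xX by simp
      then have "A \<subseteq> X" unfolding leL_def by auto
      ultimately show ?thesis using xX xv by simp
    qed
  qed
qed

lemma inner:
  assumes t: "\<tau> \<in> UU n k"
  shows "0 < idx (leT rv) \<tau> (vv \<tau>) \<and> idx (leT rv) \<tau> (vv \<tau>) < card \<tau> - 1"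
proof -
  obtain A where A: "chain_on (TT n k) leL \<tau>" "topT n \<in> \<tau>" "(A, 0) \<in> \<tau>" "(A, 1) \<in> \<tau>" "vv \<tau> = (A, 1)"
    "(A, 1) \<noteq> topT n" using t by (rule UU_D)
  have ch: "chain_on (TT n k) (leT rv) \<tau>" using A(1) chain_leT by blast
  have po: "po_on (TT n k) (leT rv)" by (rule po_leT)
  have As: "A \<subseteq> {0..n}" using TT_sub[OF chain_in[OF A(1) A(4)]] by simp
  have l1: "leL (A, 0) (A, 1)" "leL (A, 1) (topT n)" using As unfolding leL_def by auto
  have ne: "(A, 0::nat) \<noteq> (A, 1)" by simp
  show ?thesis
  proof (cases rv)
    case False
    have a: "idx (leT rv) \<tau> (A, 0) < idx (leT rv) \<tau> (A, 1)"
      by (rule idx_strict[OF po ch A(3) A(4)]) (use l1 False ne in \<open>auto simp: leT_def\<close>)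
    have b: "idx (leT rv) \<tau> (A, 1) < idx (leT rv) \<tau> (topT n)"
      by (rule idx_strict[OF po ch A(4) A(2)]) (use l1 False A(6) in \<open>auto simp: leT_def\<close>)
    have c: "idx (leT rv) \<tau> (topT n) < card \<tau>" by (rule idx_less[OF ch A(2)])
    show ?thesis using a b c A(5) by simp
  next
    case True
    have a: "idx (leT rv) \<tau> (topT n) < idx (leT rv) \<tau> (A, 1)"
      by (rule idx_strict[OF po ch A(2) A(4)]) (use l1 True A(6) in \<open>auto simp: leT_def\<close>)
    have b: "idx (leT rv) \<tau> (A, 1) < idx (leT rv) \<tau> (A, 0)"
      by (rule idx_strict[OF po ch A(4) A(3)]) (use l1 True ne in \<open>auto simp: leT_def\<close>)
    have c: "idx (leT rv) \<tau> (A, 0) < card \<tau>" by (rule idx_less[OF ch A(3)])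
    show ?thesis using a b c A(5) by simp
  qed
qed

lemma tri_form:
  assumes t: "\<tau> \<in> UU n k" and c: "card \<tau> = 3"
  obtains A where "\<tau> = {(A, 0), (A, 1), topT n}" "vv \<tau> = (A, 1)" "(A, 1) \<noteq> topT n"
    "chain_on (TT n k) leL \<tau>"
proof -
  obtain A where A: "chain_on (TT n k) leL \<tau>" "topT n \<in> \<tau>" "(A, 0) \<in> \<tau>" "(A, 1) \<in> \<tau>" "vv \<tau> = (A, 1)"
    "(A, 1) \<noteq> topT n" using t by (rule UU_D)
  have fin: "finite \<tau>" using chain_fin[OF A(1)] .
  have "{(A, 0), (A, 1), topT n} = \<tau>"
  proof (rule card_subset_eq[OF fin])
    show "{(A, 0), (A, 1), topT n} \<subseteq> \<tau>" using A by auto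
    show "card {(A, 0), (A, 1), topT n} = card \<tau>" using A(6) c by auto
  qed
  then show ?thesis using that A by auto
qed

lemma tri_faces:
  assumes t: "\<tau> \<in> UU n k" and c: "card \<tau> = 3" and U: "U \<subseteq> \<tau>" "U \<noteq> {}" "U \<noteq> \<tau>" "U \<noteq> \<tau> - {vv \<tau>}"
  shows "U \<in> DD n k"
proof -
  obtain A where A: "\<tau> = {(A, 0), (A, 1), topT n}" "vv \<tau> = (A, 1)" "(A, 1) \<noteq> topT n"
    "chain_on (TT n k) leL \<tau>" using tri_form[OF t c] .
  have ch: "chain_on (TT n k) leL U" using chain_sub[OF A(4) U(1,2)] .
  show ?thesis
  proof (cases "topT n \<in> U \<and> (A, 0) \<in> U")
    case True
    then have "U = \<tau> \<or> U = \<tau> - {vv \<tau>}" using U(1) A by auto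
    then show ?thesis using U by auto
  next
    case False
    then show ?thesis using ch U(1) A(1) unfolding DD_def by auto
  qed
qed

lemma tri_disj:
  assumes t: "\<tau> \<in> UU n k" "card \<tau> = 3" and t': "\<tau>' \<in> UU n k" "card \<tau>' = 3"
    and U: "U \<subseteq> \<tau>" "U \<subseteq> \<tau>'" "U \<noteq> {}" "U \<notin> DD n k"
  shows "\<tau> = \<tau>'"
proof -
  obtain A where A: "\<tau> = {(A, 0), (A, 1), topT n}" "chain_on (TT n k) leL \<tau>" using tri_form[OF t] by metis
  obtain B where B: "\<tau>' = {(B, 0), (B, 1), topT n}" using tri_form[OF t'] by metis
  have ch: "chain_on (TT n k) leL U" using chain_sub[OF A(2) U(1,3)] .
  then obtain x where x: "x \<in> U" "snd x \<noteq> 1" using U(4) unfolding DD_def by auto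
  have "x = (A, 0)" using x U(1) A(1) by auto
  moreover have "x = (B, 0)" using x U(2) B by auto
  ultimately show ?thesis using A B by simp
qed



lemma degen_edge:
  assumes g: "ssmap (Sc Q le F) C g" and dc: "down_closed F" and mW: "marked_sset C W"
    and s: "s \<in> ssimp (Sc Q le F) 1" and eq: "s 0 = s 1"
  shows "g 1 s \<in> W"
proof -
  define s0 where "s0 = (\<lambda>i::nat. if i \<le> 0 then s 0 else undefined)"
  have sN: "s \<in> ssimp (nerve Q le) 1" and sF: "s ` {0..1} \<in> F" using s by (simp_all add: Sc_ssimp)
  have s0N: "s0 \<in> ssimp (nerve Q le) 0" using sN unfolding s0_def nerve_ssimp by auto
  have "s0 ` {0..0} = {s 0}" unfolding s0_def by auto
  moreover have "{s 0} \<subseteq> s ` {0..1}" by auto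
  ultimately have "s0 ` {0..0} \<in> F" using dcD[OF dc sF] by auto
  then have s0S: "s0 \<in> ssimp (Sc Q le F) 0" using s0N by (simp add: Sc_ssimp)
  have mm: "mono_map 1 0 (\<lambda>_. 0)" unfolding mono_map_def by auto
  have se: "smap (Sc Q le F) 1 0 (\<lambda>_. 0) s0 = s"
  proof
    fix i show "smap (Sc Q le F) 1 0 (\<lambda>_. 0) s0 i = s i"
      using eq sN unfolding Sc_smap s0_def nerve_ssimp
      by (cases "i = 0"; cases "i = 1"; auto)
  qed
  have "g 1 s = smap C 1 0 (\<lambda>_. 0) (g 0 s0)"
    using g mm s0S se unfolding ssmap_def by metis
  moreover have "g 0 s0 \<in> ssimp C 0" using g s0S unfolding ssmap_def by blast
  ultimately show ?thesis using mW unfolding marked_sset_def by auto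
qed

definition ALLc :: "nat \<Rightarrow> nat \<Rightarrow> (nat set \<times> nat) set set" where
  "ALLc n k = {U. chain_on (TT n k) leL U}"

lemma tri_UU:
  assumes kn: "k \<le> n" and A: "(A, 0) \<in> TT n k"
  shows "{(A, 0), (A, 1), topT n} \<in> UU n k" "card {(A, 0), (A, 1), topT n} = 3"
proof -
  have As: "A \<subseteq> {0..n}" using TT_sub[OF A] by simp
  have An: "A \<noteq> {0..n}" using lev0_not_top[OF A] .
  have A1: "(A, 1) \<in> TT n k" using A unfolding TT_iff by auto
  have ch: "chain_on (TT n k) leL {(A, 0), (A, 1), topT n}"
    unfolding chain_on_def using A A1 top_TT[OF kn] As by (auto simp: leL_def)
  then show "{(A, 0), (A, 1), topT n} \<in> UU n k" unfolding UU_def by auto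
  show "card {(A, 0), (A, 1), topT n} = 3" using An by auto
qed

lemma UU_v: "\<tau> \<in> UU n k \<Longrightarrow> vv \<tau> \<in> \<tau>"
  by (erule UU_D) simp

lemma finite_UU: "finite (UU n k)"
proof -
  have "UU n k \<subseteq> Pow (TT n k)" unfolding UU_def chain_on_def by auto
  moreover have "finite (Pow (TT n k))" using finite_TT by simp
  ultimately show ?thesis by (rule finite_subset)
qed

lemma wc_fill:
  assumes wc: "weakly_closed C W" and h: "ssmap (horn 2 1) C h" and hW: "h 1 ` ssimp (horn 2 1) 1 \<subseteq> W"
  shows "\<exists>g. ssmap (Delta 2) C g \<and> g 1 ` ssimp (Delta 2) 1 \<subseteq> W \<and>
           (\<forall>m x. x \<in> ssimp (horn 2 1) m \<longrightarrow> g m x = h m x)"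
proof -
  have "ssmap (horn 2 1) C h \<and> h 1 ` ssimp (horn 2 1) 1 \<subseteq> W \<longrightarrow> (\<exists>g. ssmap (Delta 2) C g \<and> g 1 ` ssimp (Delta 2) 1 \<subseteq> W \<and>
           (\<forall>m x. x \<in> ssimp (horn 2 1) m \<longrightarrow> g m x = h m x))"
    using wc unfolding weakly_closed_def by (rule spec)
  then show ?thesis using h hW by blast
qed

lemma core:
  fixes C :: "'a sset"
  assumes kn: "k \<le> n" and qc: "quasicategory C" and mW: "marked_sset C W" and wc: "weakly_closed C W"
    and g0: "ssmap (Sc (TT n k) (leT rv) (DD n k)) C g0"
    and MT: "\<And>A. A \<in> M \<Longrightarrow> (A, 0) \<in> TT n k"
    and Mw: "\<And>A s. A \<in> M \<Longrightarrow> s \<in> ssimp (Sc (TT n k) (leT rv) (DD n k)) 1 \<Longrightarrow>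
              s ` {0..1} \<subseteq> {(A, 0), (A, 1), topT n} \<Longrightarrow> s 0 \<noteq> s 1 \<Longrightarrow> g0 1 s \<in> W"
  shows "\<exists>G. ssmap (Sc (TT n k) (leT rv) (ALLc n k)) C G \<and>
     (\<forall>m \<sigma>. \<sigma> \<in> ssimp (Sc (TT n k) (leT rv) (DD n k)) m \<longrightarrow> G m \<sigma> = g0 m \<sigma>) \<and>
     (\<forall>A\<in>M. \<forall>s\<in>ssimp (Sc (TT n k) (leT rv) (ALLc n k)) 1. s ` {0..1} = {(A, 0), topT n} \<longrightarrow> G 1 s \<in> W)"
proof -
  let ?Q = "TT n k" and ?le = "leT rv"
  have po: "po_on ?Q ?le" by (rule po_leT)
  define U3 where "U3 = {\<tau>\<in>UU n k. card \<tau> = 3}"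
  have U3UU: "\<tau> \<in> UU n k" "card \<tau> = 3" if "\<tau> \<in> U3" for \<tau> using that unfolding U3_def by auto
  have U3ch: "chain_on ?Q ?le \<tau>" if "\<tau> \<in> U3" for \<tau>
    using U3UU[OF that] chain_leT unfolding UU_def by blast
  have U3v: "vv \<tau> \<in> \<tau>" if "\<tau> \<in> U3" for \<tau>
    using U3UU[OF that] by (intro UU_v)
  have U3c: "card \<tau> - 1 = 2" if "\<tau> \<in> U3" for \<tau> using U3UU[OF that] by simp
  have U3i: "idx ?le \<tau> (vv \<tau>) = 1" if "\<tau> \<in> U3" for \<tau> using inner[OF U3UU(1)[OF that], of rv] U3UU[OF that] by simp
  have U3faces: "\<forall>U. U \<subseteq> \<tau> \<longrightarrow> U \<noteq> {} \<longrightarrow> (\<exists>w\<in>\<tau>. w \<noteq> vv \<tau> \<and> w \<notin> U) \<longrightarrow> U \<in> DD n k"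
    if t: "\<tau> \<in> U3" for \<tau>
  proof (intro allI impI)
    fix U assume U: "U \<subseteq> \<tau>" "U \<noteq> {}" "\<exists>w\<in>\<tau>. w \<noteq> vv \<tau> \<and> w \<notin> U"
    then obtain w where w: "w \<in> \<tau>" "w \<noteq> vv \<tau>" "w \<notin> U" by blast
    have "U \<noteq> \<tau>" "U \<noteq> \<tau> - {vv \<tau>}" using w by auto
    then show "U \<in> DD n k" using tri_faces[OF U3UU[OF t] U(1,2)] by blast
  qed
  define P where "P \<tau> H \<longleftrightarrow> ssmap (Delta 2) C H \<and>
      (\<forall>m \<rho>. \<rho> \<in> ssimp (horn 2 1) m \<longrightarrow> H m \<rho> = g0 m (eseq ?le \<tau> m \<rho>)) \<and>
      ((\<exists>A\<in>M. \<tau> = {(A, 0), (A, 1), topT n}) \<longrightarrow> H 1 ` ssimp (Delta 2) 1 \<subseteq> W)" for \<tau> H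
  define Hf where "Hf \<tau> = (SOME H. P \<tau> H)" for \<tau>
  have Hf_prop: "P \<tau> (Hf \<tau>)" if t: "\<tau> \<in> U3" for \<tau>
  proof -
    have hm0: "ssmap (horn (card \<tau> - 1) (idx ?le \<tau> (vv \<tau>))) C (\<lambda>m \<rho>. g0 m (eseq ?le \<tau> m \<rho>))"
      by (rule horn_map[OF po g0 DD_down U3ch[OF t] U3v[OF t] U3faces[OF t]])
    then have hm: "ssmap (horn 2 1) C (\<lambda>m \<rho>. g0 m (eseq ?le \<tau> m \<rho>))" using U3c[OF t] U3i[OF t] by simp
    have "\<exists>H. P \<tau> H"
    proof (cases "\<exists>A\<in>M. \<tau> = {(A, 0), (A, 1), topT n}")
      case True
      then obtain A where A: "A \<in> M" "\<tau> = {(A, 0), (A, 1), topT n}" by blast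
      have edges: "(\<lambda>m \<rho>. g0 m (eseq ?le \<tau> m \<rho>)) 1 ` ssimp (horn 2 1) 1 \<subseteq> W"
      proof
        fix y assume "y \<in> (\<lambda>m \<rho>. g0 m (eseq ?le \<tau> m \<rho>)) 1 ` ssimp (horn 2 1) 1"
        then obtain \<rho> where r: "\<rho> \<in> ssimp (horn 2 1) 1" and y: "y = g0 1 (eseq ?le \<tau> 1 \<rho>)" by auto
        have r': "\<rho> \<in> ssimp (horn (card \<tau> - 1) (idx ?le \<tau> (vv \<tau>))) 1" using r U3c[OF t] U3i[OF t] by simp
        have es: "eseq ?le \<tau> 1 \<rho> \<in> ssimp (Sc ?Q ?le (DD n k)) 1" "eseq ?le \<tau> 1 \<rho> ` {0..1} \<subseteq> \<tau>"
          using eseq_in_Sc[OF po DD_down U3ch[OF t] U3v[OF t] U3faces[OF t] r'] by auto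
        show "y \<in> W"
        proof (cases "eseq ?le \<tau> 1 \<rho> 0 = eseq ?le \<tau> 1 \<rho> 1")
          case True then show ?thesis using degen_edge[OF g0 DD_down mW es(1)] y by simp
        next
          case False then show ?thesis using Mw[OF A(1) es(1)] es(2) A(2) y by simp
        qed
      qed
      then obtain H where H: "ssmap (Delta 2) C H" "H 1 ` ssimp (Delta 2) 1 \<subseteq> W"
        "\<forall>m x. x \<in> ssimp (horn 2 1) m \<longrightarrow> H m x = g0 m (eseq ?le \<tau> m x)"
        using wc_fill[OF wc hm edges] by blast
      then show ?thesis unfolding P_def by blast
    next
      case False
      obtain H where "ssmap (Delta 2) C H" "\<forall>m \<rho>. \<rho> \<in> ssimp (horn 2 1) m \<longrightarrow> H m \<rho> = g0 m (eseq ?le \<tau> m \<rho>)"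
        using qc_fill[OF qc hm] by auto
      then show ?thesis using False unfolding P_def by blast
    qed
    then show ?thesis unfolding Hf_def by (rule someI_ex)
  qed
  have U3disj: "\<tau> = \<tau>'" if "\<tau> \<in> U3" "\<tau>' \<in> U3" "U \<subseteq> \<tau>" "U \<subseteq> \<tau>'" "U \<noteq> {}" "U \<notin> DD n k" for \<tau> \<tau>' U
    using tri_disj[OF U3UU[OF that(1)] U3UU[OF that(2)] that(3-6)] .
  define D' where "D' = DD n k \<union> {U. U \<noteq> {} \<and> (\<exists>\<tau>\<in>U3. U \<subseteq> \<tau>)}"
  have g1: "ssmap (Sc ?Q ?le D') C (ext_map (DD n k) ?le g0 U3 Hf)"
    unfolding D'_def
  proof (rule sim_ext[OF po g0 DD_down U3ch U3v])
    show "\<tau> \<notin> DD n k" if "\<tau> \<in> U3" for \<tau> using UU_notDD U3UU[OF that] by blast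
    show "\<tau> - {vv \<tau>} \<notin> DD n k" if "\<tau> \<in> U3" for \<tau> using UU_notDD2 U3UU[OF that] by blast
    show "U \<in> DD n k" if "\<tau> \<in> U3" "U \<subseteq> \<tau>" "U \<noteq> {}" "U \<noteq> \<tau>" "U \<noteq> \<tau> - {vv \<tau>}" for \<tau> U
      using tri_faces[OF U3UU[OF that(1)] that(2-5)] .
    show "\<tau> = \<tau>'" if "\<tau> \<in> U3" "\<tau>' \<in> U3" "U \<subseteq> \<tau>" "U \<subseteq> \<tau>'" "U \<noteq> {}" "U \<notin> DD n k" for \<tau> \<tau>' U
      using U3disj[OF that] .
    show "ssmap (Delta (card \<tau> - 1)) C (Hf \<tau>)" if "\<tau> \<in> U3" for \<tau>
      using Hf_prop[OF that] U3c[OF that] unfolding P_def by simp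
    show "Hf \<tau> m \<rho> = g0 m (eseq ?le \<tau> m \<rho>)"
      if "\<tau> \<in> U3" "\<rho> \<in> ssimp (horn (card \<tau> - 1) (idx ?le \<tau> (vv \<tau>))) m" for \<tau> m \<rho>
      using Hf_prop[OF that(1)] that(2) U3c[OF that(1)] U3i[OF that(1)] unfolding P_def by simp
  qed
  define U' where "U' = {\<tau>\<in>UU n k. card \<tau> \<noteq> 3}"
  have U'UU: "\<tau> \<in> UU n k" "card \<tau> \<noteq> 3" if "\<tau> \<in> U'" for \<tau> using that unfolding U'_def by auto
  have dcD': "down_closed D'"
    unfolding down_closed_def
  proof (intro ballI allI impI)
    fix U V assume U: "U \<in> D'" and V: "V \<subseteq> U" "V \<noteq> {}"
    show "V \<in> D'"
    proof (cases "U \<in> DD n k")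
      case True then show ?thesis using dcD[OF DD_down True V] unfolding D'_def by blast
    next
      case False
      then obtain \<tau> where "\<tau> \<in> U3" "U \<subseteq> \<tau>" using U unfolding D'_def by blast
      then show ?thesis using V unfolding D'_def by blast
    qed
  qed
  have card3: "3 < card \<tau>" if "\<tau> \<in> U'" for \<tau> using UU_card3[OF U'UU(1)[OF that]] U'UU(2)[OF that] by simp
  have notsub3: "\<not> X \<subseteq> \<tau>3" if "\<tau>3 \<in> U3" "3 < card X" "finite X" for X \<tau>3
  proof
    assume "X \<subseteq> \<tau>3"
    moreover have "finite \<tau>3" using U3UU(1)[OF that(1)] unfolding UU_def chain_on_def by auto
    ultimately have "card X \<le> card \<tau>3" by (rule card_mono[rotated])
    then show False using U3UU(2)[OF that(1)] that(2) by simp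
  qed
  have finU': "finite U'" using finite_UU unfolding U'_def by auto
  have finT: "finite \<tau>" if "\<tau> \<in> UU n k" for \<tau> using that unfolding UU_def chain_on_def by auto
  obtain G where G: "ssmap (Sc ?Q ?le (D' \<union> {U. U \<noteq> {} \<and> (\<exists>\<tau>\<in>U'. U \<subseteq> \<tau>)})) C G"
    and GD': "\<forall>m \<sigma>. \<sigma> \<in> ssimp (Sc ?Q ?le D') m \<longrightarrow> G m \<sigma> = ext_map (DD n k) ?le g0 U3 Hf m \<sigma>"
  proof (atomize_elim, rule iterate[OF po qc dcD', where v = vv and r = rr])
    show "chain_on ?Q ?le \<tau>" if "\<tau> \<in> U'" for \<tau> using U'UU[OF that] chain_leT unfolding UU_def by blast
    show "finite U'" by (rule finU')
    show "vv \<tau> \<in> \<tau>" if "\<tau> \<in> U'" for \<tau> using U'UU[OF that] by (intro UU_v)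
    show "0 < idx ?le \<tau> (vv \<tau>) \<and> idx ?le \<tau> (vv \<tau>) < card \<tau> - 1" if "\<tau> \<in> U'" for \<tau>
      using inner[OF U'UU(1)[OF that]] .
    show "\<tau> \<notin> D'" if t: "\<tau> \<in> U'" for \<tau>
      using UU_notDD[OF U'UU(1)[OF t]] notsub3[OF _ card3[OF t] finT[OF U'UU(1)[OF t]]] unfolding D'_def by blast
    show "\<tau> - {vv \<tau>} \<notin> D'" if t: "\<tau> \<in> U'" for \<tau>
    proof
      assume a: "\<tau> - {vv \<tau>} \<in> D'"
      have nd: "\<tau> - {vv \<tau>} \<notin> DD n k" using UU_notDD2[OF U'UU(1)[OF t]] .
      then obtain \<tau>3 where t3: "\<tau>3 \<in> U3" "\<tau> - {vv \<tau>} \<subseteq> \<tau>3" using a unfolding D'_def by blast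
      have vin: "vv \<tau> \<in> \<tau>" using U'UU(1)[OF t] by (intro UU_v)
      have fin: "finite \<tau>" using finT[OF U'UU(1)[OF t]] .
      have c: "card (\<tau> - {vv \<tau>}) = card \<tau> - 1" using fin vin by simp
      have f3: "finite \<tau>3" using finT[OF U3UU(1)[OF t3(1)]] .
      have "card (\<tau> - {vv \<tau>}) \<le> card \<tau>3" using card_mono[OF f3 t3(2)] .
      moreover have "card \<tau>3 = 3" using U3UU[OF t3(1)] by simp
      ultimately have "card (\<tau> - {vv \<tau>}) = card \<tau>3" using c card3[OF t] by simp
      then have "\<tau> - {vv \<tau>} = \<tau>3" using card_subset_eq[OF f3 t3(2)] by simp
      then show False using UU_minus_not_UU[OF U'UU(1)[OF t]] U3UU(1)[OF t3(1)] by simp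
    qed
    show "\<tau> - {w} \<in> D' \<or> (\<exists>\<tau>'\<in>U'. rr \<tau>' < rr \<tau> \<and> \<tau> - {w} \<subseteq> \<tau>')"
      if t: "\<tau> \<in> U'" and w: "w \<in> \<tau>" "w \<noteq> vv \<tau>" for \<tau> w
    proof -
      from F4[OF U'UU(1)[OF t] w] show ?thesis
      proof
        assume "\<tau> - {w} \<in> DD n k" then show ?thesis unfolding D'_def by blast
      next
        assume "\<exists>\<tau>'\<in>UU n k. rr \<tau>' < rr \<tau> \<and> \<tau> - {w} \<subseteq> \<tau>'"
        then obtain \<tau>' where t': "\<tau>' \<in> UU n k" "rr \<tau>' < rr \<tau>" "\<tau> - {w} \<subseteq> \<tau>'" by blast
        show ?thesis
        proof (cases "card \<tau>' = 3")
          case True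
          have "card (\<tau> - {w}) > 0" using card3[OF t] finT[OF U'UU(1)[OF t]] w(1) by simp
          then have "\<tau> - {w} \<noteq> {}" by (metis card.empty less_irrefl)
          then show ?thesis using t' True unfolding D'_def U3_def by blast
        next
          case False then show ?thesis using t' unfolding U'_def by blast
        qed
      qed
    qed
    show "rr \<tau> < rr \<tau>'" if "\<tau> \<in> U'" "\<tau>' \<in> U'" "\<tau> - {vv \<tau>} \<subseteq> \<tau>'" "\<tau>' \<noteq> \<tau>" for \<tau> \<tau>'
      using F5[OF U'UU(1)[OF that(1)] U'UU(1)[OF that(2)] that(3,4)] .
    show "rr \<tau> < rr \<tau>'" if "\<tau> \<in> U'" "\<tau>' \<in> U'" "\<tau> \<subseteq> \<tau>'" "\<tau> \<noteq> \<tau>'" for \<tau> \<tau>'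
      using F6[OF U'UU(1)[OF that(1)] U'UU(1)[OF that(2)] that(3,4)] .
  qed (rule g1)
  have fam: "D' \<union> {U. U \<noteq> {} \<and> (\<exists>\<tau>\<in>U'. U \<subseteq> \<tau>)} = ALLc n k"
  proof
    show "D' \<union> {U. U \<noteq> {} \<and> (\<exists>\<tau>\<in>U'. U \<subseteq> \<tau>)} \<subseteq> ALLc n k"
    proof
      fix U assume "U \<in> D' \<union> {U. U \<noteq> {} \<and> (\<exists>\<tau>\<in>U'. U \<subseteq> \<tau>)}"
      then have "U \<in> DD n k \<or> (U \<noteq> {} \<and> (\<exists>\<tau>\<in>UU n k. U \<subseteq> \<tau>))" unfolding D'_def U3_def U'_def by blast
      then show "U \<in> ALLc n k"
      proof
        assume "U \<in> DD n k" then show ?thesis unfolding DD_def ALLc_def by auto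
      next
        assume "U \<noteq> {} \<and> (\<exists>\<tau>\<in>UU n k. U \<subseteq> \<tau>)"
        then obtain \<tau> where "\<tau> \<in> UU n k" "U \<subseteq> \<tau>" "U \<noteq> {}" by blast
        then show ?thesis using chain_sub unfolding UU_def ALLc_def by blast
      qed
    qed
    show "ALLc n k \<subseteq> D' \<union> {U. U \<noteq> {} \<and> (\<exists>\<tau>\<in>U'. U \<subseteq> \<tau>)}"
    proof
      fix U assume U: "U \<in> ALLc n k"
      then have ch: "chain_on ?Q leL U" unfolding ALLc_def by auto
      then have ne: "U \<noteq> {}" unfolding chain_on_def by auto
      show "U \<in> D' \<union> {U. U \<noteq> {} \<and> (\<exists>\<tau>\<in>U'. U \<subseteq> \<tau>)}"
      proof (cases "U \<in> DD n k")
        case True then show ?thesis unfolding D'_def by blast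
      next
        case False
        then obtain \<tau> where "\<tau> \<in> UU n k" "U \<subseteq> \<tau>" using cover[OF ch] by blast
        show ?thesis
        proof (cases "card \<tau> = 3")
          case True
          then have "\<tau> \<in> U3" using \<open>\<tau> \<in> UU n k\<close> unfolding U3_def by simp
          then have "U \<in> D'" using ne \<open>U \<subseteq> \<tau>\<close> unfolding D'_def by blast
          then show ?thesis by blast
        next
          case False
          then have "\<tau> \<in> U'" using \<open>\<tau> \<in> UU n k\<close> unfolding U'_def by simp
          then show ?thesis using ne \<open>U \<subseteq> \<tau>\<close> by blast
        qed
      qed
    qed
  qed
  have DDD': "DD n k \<subseteq> D'" unfolding D'_def by blast
  show ?thesis
  proof (intro exI conjI ballI allI impI)
    show "ssmap (Sc ?Q ?le (ALLc n k)) C G" using G unfolding fam .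
  next
    fix m \<sigma> assume s: "\<sigma> \<in> ssimp (Sc ?Q ?le (DD n k)) m"
    then have "\<sigma> \<in> ssimp (Sc ?Q ?le D') m" using DDD' by (auto simp: Sc_ssimp)
    then have "G m \<sigma> = ext_map (DD n k) ?le g0 U3 Hf m \<sigma>" using GD' by blast
    also have "\<dots> = g0 m \<sigma>" using s by (intro ext_map_old) (simp add: Sc_ssimp)
    finally show "G m \<sigma> = g0 m \<sigma>" .
  next
    fix A s assume A: "A \<in> M" and s: "s \<in> ssimp (Sc ?Q ?le (ALLc n k)) 1" and im: "s ` {0..1} = {(A, 0), topT n}"
    let ?t = "{(A, 0), (A, 1), topT n}"
    have t3: "?t \<in> U3" using tri_UU[OF kn MT[OF A]] unfolding U3_def by auto
    have sN: "s \<in> ssimp (nerve ?Q ?le) 1" using s by (simp add: Sc_ssimp)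
    have sub: "s ` {0..1} \<subseteq> ?t" using im by auto
    have "s ` {0..1} \<in> D'" using t3 sub im unfolding D'_def by blast
    then have "s \<in> ssimp (Sc ?Q ?le D') 1" using sN by (simp add: Sc_ssimp)
    then have "G 1 s = ext_map (DD n k) ?le g0 U3 Hf 1 s" using GD' by blast
    also have "\<dots> = Hf ?t 1 (iseq ?le ?t 1 s)"
    proof (rule ext_map_new[OF _ t3 sub])
      show "\<tau> = \<tau>'" if "\<tau> \<in> U3" "\<tau>' \<in> U3" "U \<subseteq> \<tau>" "U \<subseteq> \<tau>'" "U \<noteq> {}" "U \<notin> DD n k" for \<tau> \<tau>' U
        using U3disj[OF that] .
      show "s ` {0..1} \<notin> DD n k" unfolding im DD_def by auto
    qed
    finally have Gs: "G 1 s = Hf ?t 1 (iseq ?le ?t 1 s)" .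
    have "iseq ?le ?t 1 s \<in> ssimp (Delta (card ?t - 1)) 1" by (rule iseq_Delta[OF po U3ch[OF t3] sN sub])
    then have "iseq ?le ?t 1 s \<in> ssimp (Delta 2) 1" using U3c[OF t3] by simp
    moreover have "Hf ?t 1 ` ssimp (Delta 2) 1 \<subseteq> W" using Hf_prop[OF t3] A unfolding P_def by blast
    ultimately show "G 1 s \<in> W" using Gs by auto
  qed
qed



definition ordP :: "bool \<Rightarrow> nat set \<Rightarrow> nat set \<Rightarrow> bool" where
  "ordP rv A B = (if rv then B \<subseteq> A else A \<subseteq> B)"

definition NN :: "bool \<Rightarrow> nat \<Rightarrow> nat \<Rightarrow> (nat \<Rightarrow> nat set) sset" where
  "NN rv n k = nerve (subsets_with n k) (ordP rv)"

definition NJ :: "bool \<Rightarrow> nat \<Rightarrow> nat \<Rightarrow> (nat \<Rightarrow> nat set) sset" where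
  "NJ rv n k = subsset (NN rv n k) (\<lambda>m. {\<sigma> \<in> ssimp (NN rv n k) m. \<forall>i\<le>m. \<sigma> i \<noteq> {0..n}})"

definition MK :: "bool \<Rightarrow> nat \<Rightarrow> nat \<Rightarrow> (nat \<Rightarrow> nat set) set" where
  "MK rv n k = {\<sigma> \<in> ssimp (NN rv n k) 1. (if rv then Min (\<sigma> 0) = Min (\<sigma> 1) else Max (\<sigma> 0) = Max (\<sigma> 1))}"

lemma NN_L: "NN False n k = L n k"
  unfolding NN_def L_def ordP_def by simp

lemma NN_R: "NN True n k = R n k"
  unfolding NN_def R_def ordP_def by simp

lemma NJ_L: "NJ False n k = LJ n k"
  unfolding NJ_def LJ_def NN_L ..

lemma NJ_R: "NJ True n k = RJ n k"
  unfolding NJ_def RJ_def NN_R ..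

lemma MK_L: "MK False n k = L_marked n k"
  unfolding MK_def L_marked_def NN_L by simp

lemma MK_R: "MK True n k = R_marked n k"
  unfolding MK_def R_marked_def NN_R by simp

lemma NN_ssimp: "\<sigma> \<in> ssimp (NN rv n k) m \<longleftrightarrow> (\<forall>i\<le>m. \<sigma> i \<in> subsets_with n k) \<and>
   (\<forall>i j. i \<le> j \<longrightarrow> j \<le> m \<longrightarrow> ordP rv (\<sigma> i) (\<sigma> j)) \<and> (\<forall>i>m. \<sigma> i = undefined)"
  unfolding NN_def nerve_ssimp ..

lemma NN_smap: "smap (NN rv n k) m n' \<theta> \<sigma> = (\<lambda>i. if i \<le> m then \<sigma> (\<theta> i) else undefined)"
  unfolding NN_def nerve_smap ..

lemma NJ_ssimp: "\<sigma> \<in> ssimp (NJ rv n k) m \<longleftrightarrow> \<sigma> \<in> ssimp (NN rv n k) m \<and> (\<forall>i\<le>m. \<sigma> i \<noteq> {0..n})"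
  unfolding NJ_def subsset_def by simp

lemma NJ_smap: "smap (NJ rv n k) = smap (NN rv n k)"
  unfolding NJ_def subsset_def by simp

lemma sprod_ssimp: "p \<in> ssimp (sprod X Y) m \<longleftrightarrow> fst p \<in> ssimp X m \<and> snd p \<in> ssimp Y m"
  unfolding sprod_def by (cases p) auto

lemma sprod_smap: "smap (sprod X Y) m n \<theta> (x, y) = (smap X m n \<theta> x, smap Y m n \<theta> y)"
  unfolding sprod_def by simp

definition pf :: "nat \<Rightarrow> (nat \<Rightarrow> nat set \<times> nat) \<Rightarrow> nat \<Rightarrow> nat set" where
  "pf m s = (\<lambda>i. if i \<le> m then fst (s i) else undefined)"

definition ps :: "bool \<Rightarrow> nat \<Rightarrow> (nat \<Rightarrow> nat set \<times> nat) \<Rightarrow> nat \<Rightarrow> nat" where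
  "ps rv m s = (\<lambda>i. if i \<le> m then (if rv then 1 - snd (s i) else snd (s i)) else undefined)"

definition emb :: "nat \<Rightarrow> nat \<Rightarrow> (nat \<Rightarrow> nat set) \<Rightarrow> nat \<Rightarrow> nat set \<times> nat" where
  "emb n m \<sigma> = (\<lambda>i. if i \<le> m then (if \<sigma> i = {0..n} then topT n else (\<sigma> i, 0)) else undefined)"

lemma leT_ordP: "leT rv x y \<Longrightarrow> ordP rv (fst x) (fst y)"
  unfolding leT_def leL_def ordP_def by (cases rv) auto

lemma pf_NN:
  assumes s: "s \<in> ssimp (nerve (TT n k) (leT rv)) m"
  shows "pf m s \<in> ssimp (NN rv n k) m"
  unfolding NN_ssimp
proof (intro conjI allI impI)
  fix i assume "i \<le> m"
  then show "pf m s i \<in> subsets_with n k" using s unfolding pf_def nerve_ssimp TT_def by auto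
next
  fix i j assume "i \<le> j" "j \<le> m"
  then show "ordP rv (pf m s i) (pf m s j)" using s leT_ordP unfolding pf_def nerve_ssimp by auto
qed (auto simp: pf_def)

lemma pf_NJ:
  assumes s: "s \<in> ssimp (nerve (TT n k) (leT rv)) m" and nt: "topT n \<notin> s ` {0..m}"
  shows "pf m s \<in> ssimp (NJ rv n k) m"
  unfolding NJ_ssimp
proof (intro conjI allI impI)
  show "pf m s \<in> ssimp (NN rv n k) m" by (rule pf_NN[OF s])
  fix i assume i: "i \<le> m"
  have si: "s i \<in> s ` {0..m}" using i by (intro imageI) simp
  have "s i \<noteq> topT n" using si nt by metis
  moreover have "s i \<in> TT n k" using s i unfolding nerve_ssimp by auto
  ultimately have "s i \<in> TT n k" "s i \<noteq> topT n" by auto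
  then show "pf m s i \<noteq> {0..n}" using i unfolding pf_def TT_iff by (cases "s i") auto
qed

lemma ps_Delta:
  assumes s: "s \<in> ssimp (nerve (TT n k) (leT rv)) m"
  shows "ps rv m s \<in> ssimp (Delta 1) m"
  unfolding Delta_ssimp
proof (intro conjI allI impI)
  fix i assume "i \<le> m"
  moreover then have "snd (s i) \<le> 1" using s unfolding nerve_ssimp TT_iff by auto
  ultimately show "ps rv m s i \<le> 1" unfolding ps_def by auto
next
  fix i j assume ij: "i \<le> j" "j \<le> m"
  then have "leT rv (s i) (s j)" using s unfolding nerve_ssimp by auto
  then show "ps rv m s i \<le> ps rv m s j" using ij unfolding ps_def leT_def leL_def by (cases rv) auto
qed (auto simp: ps_def)

lemma pf_smap: "mono_map m n' \<theta> \<Longrightarrow> pf m (smap (nerve Q le) m n' \<theta> s) = smap (NN rv n k) m n' \<theta> (pf n' s)"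
  unfolding pf_def nerve_smap NN_smap
proof (rule ext)
  fix i assume "mono_map m n' \<theta>"
  then show "(if i \<le> m then fst (if i \<le> m then s (\<theta> i) else undefined) else undefined) =
    (if i \<le> m then if \<theta> i \<le> n' then fst (s (\<theta> i)) else undefined else undefined)"
    by (cases "i \<le> m") (simp_all add: mono_mapD)
qed

lemma ps_smap: "mono_map m n' \<theta> \<Longrightarrow> ps rv m (smap (nerve Q le) m n' \<theta> s) = smap (Delta 1) m n' \<theta> (ps rv n' s)"
  unfolding ps_def nerve_smap Delta_smap
proof (rule ext)
  fix i assume "mono_map m n' \<theta>"
  then show "(if i \<le> m then (if rv then 1 - snd (if i \<le> m then s (\<theta> i) else undefined) else snd (if i \<le> m then s (\<theta> i) else undefined)) else undefined) =
    (if i \<le> m then if \<theta> i \<le> n' then (if rv then 1 - snd (s (\<theta> i)) else snd (s (\<theta> i))) else undefined else undefined)"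
    by (cases "i \<le> m") (simp_all add: mono_mapD)
qed

lemma DD_top_all1:
  fixes s :: "nat \<Rightarrow> nat set \<times> nat"
  assumes "s ` {0..m} \<in> DD n k" "topT n \<in> s ` {0..m}" "i \<le> m"
  shows "snd (s i) = 1"
proof -
  have "\<forall>x\<in>s ` {0..m}. snd x = 1" using assms(1,2) unfolding DD_def by auto
  moreover have "s i \<in> s ` {0..m}" using assms(3) by (intro imageI) simp
  ultimately show ?thesis by blast
qed

lemma ps_const:
  fixes s :: "nat \<Rightarrow> nat set \<times> nat"
  assumes "\<forall>i\<le>m. snd (s i) = 1"
  shows "ps rv m s = const_simplex m (if rv then 0 else 1)"
  using assms unfolding ps_def const_simplex_def by (auto intro!: ext)

definition gz :: "nat \<Rightarrow> bool \<Rightarrow> (nat \<Rightarrow> (nat \<Rightarrow> nat set) \<Rightarrow> 'a) \<Rightarrow> (nat \<Rightarrow> (nat \<Rightarrow> nat set) \<Rightarrow> 'a)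
   \<Rightarrow> (nat \<Rightarrow> 'a \<times> (nat \<Rightarrow> nat) \<Rightarrow> 'a) \<Rightarrow> nat \<Rightarrow> (nat \<Rightarrow> nat set \<times> nat) \<Rightarrow> 'a" where
  "gz n rv g' f \<alpha> m s = (if topT n \<in> s ` {0..m} then g' m (pf m s) else \<alpha> m (f m (pf m s), ps rv m s))"

lemma ssmapD1: "ssmap X Y f \<Longrightarrow> x \<in> ssimp X n \<Longrightarrow> f n x \<in> ssimp Y n"
  unfolding ssmap_def by blast

lemma ssmapD2: "ssmap X Y f \<Longrightarrow> mono_map m n \<theta> \<Longrightarrow> x \<in> ssimp X n \<Longrightarrow> f m (smap X m n \<theta> x) = smap Y m n \<theta> (f n x)"
  unfolding ssmap_def by blast

lemma g0_ssmap:
  fixes C :: "'a sset"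
  assumes \<alpha>: "ssmap (sprod C (Delta 1)) C \<alpha>"
    and \<alpha>F: "\<And>m x. x \<in> ssimp C m \<Longrightarrow> \<alpha> m (x, const_simplex m (if rv then 0 else 1)) = F m x"
    and f: "ssmap (NJ rv n k) C f"
    and g': "ssmap (NN rv n k) C g'"
    and g'f: "\<And>m x. x \<in> ssimp (NJ rv n k) m \<Longrightarrow> g' m x = F m (f m x)"
  shows "ssmap (Sc (TT n k) (leT rv) (DD n k)) C (gz n rv g' f \<alpha>)"
  unfolding ssmap_def
proof (intro conjI allI impI)
  fix m s assume sS: "s \<in> ssimp (Sc (TT n k) (leT rv) (DD n k)) m"
  then have sN: "s \<in> ssimp (nerve (TT n k) (leT rv)) m" by (simp add: Sc_ssimp)
  show "gz n rv g' f \<alpha> m s \<in> ssimp C m"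
  proof (cases "topT n \<in> s ` {0..m}")
    case True
    then show ?thesis unfolding gz_def using ssmapD1[OF g' pf_NN[OF sN]] by simp
  next
    case False
    have "(f m (pf m s), ps rv m s) \<in> ssimp (sprod C (Delta 1)) m"
      using ssmapD1[OF f pf_NJ[OF sN False]] ps_Delta[OF sN] by (simp add: sprod_ssimp)
    then show ?thesis unfolding gz_def using ssmapD1[OF \<alpha>] False by simp
  qed
next
  fix m n' \<theta> s assume th: "mono_map m n' \<theta>" and sS: "s \<in> ssimp (Sc (TT n k) (leT rv) (DD n k)) n'"
  then have sN: "s \<in> ssimp (nerve (TT n k) (leT rv)) n'" and sD: "s ` {0..n'} \<in> DD n k" by (simp_all add: Sc_ssimp)
  let ?s = "smap (nerve (TT n k) (leT rv)) m n' \<theta> s"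
  have e: "smap (Sc (TT n k) (leT rv) (DD n k)) m n' \<theta> s = ?s" by (simp add: Sc_smap nerve_smap)
  have sN': "?s \<in> ssimp (nerve (TT n k) (leT rv)) m" by (rule nerve_smap_in[OF sN th])
  have img: "?s ` {0..m} \<subseteq> s ` {0..n'}" by (rule nerve_smap_image[OF th])
  have pfe: "pf m ?s = smap (NN rv n k) m n' \<theta> (pf n' s)" by (rule pf_smap[OF th])
  have pse: "ps rv m ?s = smap (Delta 1) m n' \<theta> (ps rv n' s)" by (rule ps_smap[OF th])
  show "gz n rv g' f \<alpha> m (smap (Sc (TT n k) (leT rv) (DD n k)) m n' \<theta> s) = smap C m n' \<theta> (gz n rv g' f \<alpha> n' s)"
    unfolding e
  proof (cases "topT n \<in> s ` {0..n'}")
    case False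
    then have F': "topT n \<notin> ?s ` {0..m}" using img by auto
    have pNJ: "pf n' s \<in> ssimp (NJ rv n k) n'" by (rule pf_NJ[OF sN False])
    have pD: "ps rv n' s \<in> ssimp (Delta 1) n'" by (rule ps_Delta[OF sN])
    have "gz n rv g' f \<alpha> m ?s = \<alpha> m (f m (pf m ?s), ps rv m ?s)" unfolding gz_def using F' by simp
    also have "f m (pf m ?s) = smap C m n' \<theta> (f n' (pf n' s))"
      unfolding pfe using ssmapD2[OF f th pNJ] by (simp add: NJ_smap)
    also have "(smap C m n' \<theta> (f n' (pf n' s)), ps rv m ?s) = smap (sprod C (Delta 1)) m n' \<theta> (f n' (pf n' s), ps rv n' s)"
      unfolding pse sprod_smap ..
    also have "\<alpha> m \<dots> = smap C m n' \<theta> (\<alpha> n' (f n' (pf n' s), ps rv n' s))"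
      using ssmapD2[OF \<alpha> th] ssmapD1[OF f pNJ] pD by (simp add: sprod_ssimp)
    also have "\<dots> = smap C m n' \<theta> (gz n rv g' f \<alpha> n' s)" unfolding gz_def using False by simp
    finally show "gz n rv g' f \<alpha> m ?s = smap C m n' \<theta> (gz n rv g' f \<alpha> n' s)" .
  next
    case True
    have pNN: "pf n' s \<in> ssimp (NN rv n k) n'" by (rule pf_NN[OF sN])
    have R: "smap C m n' \<theta> (gz n rv g' f \<alpha> n' s) = g' m (pf m ?s)"
      unfolding gz_def using True pfe ssmapD2[OF g' th pNN] by simp
    show "gz n rv g' f \<alpha> m ?s = smap C m n' \<theta> (gz n rv g' f \<alpha> n' s)"
    proof (cases "topT n \<in> ?s ` {0..m}")
      case True
      then show ?thesis unfolding R unfolding gz_def by simp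
    next
      case F': False
      have all1: "\<forall>i\<le>m. snd (?s i) = 1"
      proof (intro allI impI)
        fix i assume i: "i \<le> m"
        have "\<theta> i \<le> n'" using mono_mapD[OF th i] .
        then have "snd (s (\<theta> i)) = 1" using DD_top_all1[OF sD True] by blast
        then show "snd (?s i) = 1" using i by (simp add: nerve_smap)
      qed
      have pNJ': "pf m ?s \<in> ssimp (NJ rv n k) m" by (rule pf_NJ[OF sN' F'])
      have "gz n rv g' f \<alpha> m ?s = \<alpha> m (f m (pf m ?s), const_simplex m (if rv then 0 else 1))"
        unfolding gz_def using F' ps_const[OF all1] by simp
      also have "\<dots> = F m (f m (pf m ?s))" using \<alpha>F ssmapD1[OF f pNJ'] by blast
      also have "\<dots> = g' m (pf m ?s)" using g'f[OF pNJ'] by simp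
      finally show ?thesis unfolding R .
    qed
  qed
qed

lemma sw_fin: "A \<in> subsets_with n k \<Longrightarrow> finite A \<and> A \<noteq> {} \<and> A \<subseteq> {0..n}"
  unfolding subsets_with_def by (auto intro: finite_subset)

lemma Max_top: "Max {0..n::nat} = n"
  by (rule Max_eqI) auto

lemma Min_top: "Min {0..n::nat} = 0"
  by (rule Min_eqI) auto

lemma Max_n: "A \<in> subsets_with n k \<Longrightarrow> n \<in> A \<Longrightarrow> Max A = n"
  using sw_fin[of A n k] by (intro Max_eqI) auto

lemma Min_0: "A \<in> subsets_with n k \<Longrightarrow> (0::nat) \<in> A \<Longrightarrow> Min A = 0"
  using sw_fin[of A n k] by (intro Min_eqI) auto

lemma Max_n_in: "A \<in> subsets_with n k \<Longrightarrow> Max A = n \<Longrightarrow> n \<in> A"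
  using sw_fin[of A n k] Max_in by metis

lemma Min_0_in: "A \<in> subsets_with n k \<Longrightarrow> Min A = 0 \<Longrightarrow> (0::nat) \<in> A"
  using sw_fin[of A n k] Min_in by metis

definition MA :: "bool \<Rightarrow> nat \<Rightarrow> nat \<Rightarrow> nat set set" where
  "MA rv n k = {A. (A, 0) \<in> TT n k \<and> (if rv then 0 \<in> A else n \<in> A)}"

lemma Mw_lemma:
  fixes C :: "'a sset"
  assumes \<alpha>: "ssmap (sprod C (Delta 1)) C \<alpha>" and \<alpha>W: "\<alpha> 1 ` (W \<times> ssimp (Delta 1) 1) \<subseteq> W"
    and f: "ssmap (NJ rv n k) C f" and fW: "f 1 ` (MK rv n k \<inter> ssimp (NJ rv n k) 1) \<subseteq> W"
    and g': "ssmap (NN rv n k) C g'" and g'W: "g' 1 ` MK rv n k \<subseteq> W0" and sub: "W0 \<subseteq> W"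
    and A: "A \<in> MA rv n k"
    and sS: "s \<in> ssimp (Sc (TT n k) (leT rv) (DD n k)) 1" and img: "s ` {0..1} \<subseteq> {(A, 0), (A, 1), topT n}"
    and ne: "s 0 \<noteq> s 1"
  shows "gz n rv g' f \<alpha> 1 s \<in> W"
proof -
  have sN: "s \<in> ssimp (nerve (TT n k) (leT rv)) 1" and sD: "s ` {0..1} \<in> DD n k" using sS by (simp_all add: Sc_ssimp)
  have AT: "(A, 0) \<in> TT n k" and Ac: "if rv then 0 \<in> A else n \<in> A" using A unfolding MA_def by auto
  have Asw: "A \<in> subsets_with n k" and An: "A \<noteq> {0..n}" using AT unfolding TT_def by auto
  have i01: "s 0 \<in> s ` {0..1}" "s 1 \<in> s ` {0..1}" by (intro imageI; simp)+
  have s01: "s 0 \<in> {(A, 0), (A, 1), topT n}" "s 1 \<in> {(A, 0), (A, 1), topT n}" using img i01 by blast+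
  show ?thesis
  proof (cases "topT n \<in> s ` {0..1}")
    case False
    then have nt: "s 0 \<noteq> topT n" "s 1 \<noteq> topT n" using i01 by metis+
    have pfe: "pf 1 s 0 = A" "pf 1 s 1 = A" using s01 nt unfolding pf_def by auto
    have pNJ: "pf 1 s \<in> ssimp (NJ rv n k) 1" by (rule pf_NJ[OF sN False])
    then have "pf 1 s \<in> MK rv n k" using pfe unfolding MK_def NJ_ssimp by simp
    then have fw: "f 1 (pf 1 s) \<in> W" using fW pNJ by blast
    have "ps rv 1 s \<in> ssimp (Delta 1) 1" by (rule ps_Delta[OF sN])
    then have "\<alpha> 1 (f 1 (pf 1 s), ps rv 1 s) \<in> W" using \<alpha>W fw by blast
    then show ?thesis unfolding gz_def using False by simp
  next
    case True
    have "\<forall>x\<in>s ` {0..1}. snd x = 1" using sD True unfolding DD_def by auto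
    have "(A, 0) \<notin> s ` {0..1}"
    proof
      assume "(A, 0) \<in> s ` {0..1}"
      then have "snd (A, 0::nat) = 1" using \<open>\<forall>x\<in>s ` {0..1}. snd x = 1\<close> by blast
      then show False by simp
    qed
    then have "s 0 \<noteq> (A, 0)" "s 1 \<noteq> (A, 0)" using i01 by metis+
    then have s01': "s 0 \<in> {(A, 1), topT n}" "s 1 \<in> {(A, 1), topT n}" using s01 by auto
    have pNN: "pf 1 s \<in> ssimp (NN rv n k) 1" by (rule pf_NN[OF sN])
    have pv: "pf 1 s 0 \<in> {A, {0..n}}" "pf 1 s 1 \<in> {A, {0..n}}" using s01' unfolding pf_def by auto
    have "pf 1 s \<in> MK rv n k"
    proof (cases rv)
      case True
      then have "Min A = 0" using Ac Min_0[OF Asw] by simp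
      then have "Min (pf 1 s 0) = 0" "Min (pf 1 s 1) = 0" using pv Min_top by auto
      then show ?thesis unfolding MK_def using pNN True by simp
    next
      case False
      then have "Max A = n" using Ac Max_n[OF Asw] by simp
      then have "Max (pf 1 s 0) = n" "Max (pf 1 s 1) = n" using pv Max_top by auto
      then show ?thesis unfolding MK_def using pNN False by simp
    qed
    then have "g' 1 (pf 1 s) \<in> W" using g'W sub by blast
    then show ?thesis unfolding gz_def using True by simp
  qed
qed

definition embv :: "nat \<Rightarrow> nat set \<Rightarrow> nat set \<times> nat" where
  "embv n A = (if A = {0..n} then topT n else (A, 0))"

lemma embv_le:
  assumes "A \<subseteq> B" "B \<subseteq> {0..n}"
  shows "leL (embv n A) (embv n B)"
proof (cases "B = {0..n}")
  case True then show ?thesis using assms unfolding embv_def leL_def by auto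
next
  case False
  then have "A \<noteq> {0..n}" using assms by auto
  then show ?thesis using False assms unfolding embv_def leL_def by auto
qed

lemma embv_TT: "k \<le> n \<Longrightarrow> A \<in> subsets_with n k \<Longrightarrow> embv n A \<in> TT n k"
  unfolding embv_def using top_TT[of k n] by (auto simp: TT_def)

lemma emb_eq: "emb n m \<sigma> = (\<lambda>i. if i \<le> m then embv n (\<sigma> i) else undefined)"
  unfolding emb_def embv_def ..

lemma emb_Sc:
  assumes kn: "k \<le> n" and s: "\<sigma> \<in> ssimp (NN rv n k) m"
  shows "emb n m \<sigma> \<in> ssimp (Sc (TT n k) (leT rv) (ALLc n k)) m"
proof -
  have N: "emb n m \<sigma> \<in> ssimp (nerve (TT n k) (leT rv)) m"
    unfolding nerve_ssimp emb_eq
  proof (intro conjI allI impI)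
    fix i assume "i \<le> m"
    then show "(if i \<le> m then embv n (\<sigma> i) else undefined) \<in> TT n k" using s embv_TT[OF kn] unfolding NN_ssimp by auto
  next
    fix i j assume ij: "i \<le> j" "j \<le> m"
    then have o: "ordP rv (\<sigma> i) (\<sigma> j)" and sw: "\<sigma> i \<in> subsets_with n k" "\<sigma> j \<in> subsets_with n k"
      using s unfolding NN_ssimp by auto
    have sub: "\<sigma> i \<subseteq> {0..n}" "\<sigma> j \<subseteq> {0..n}" using sw sw_fin by blast+
    show "leT rv (if i \<le> m then embv n (\<sigma> i) else undefined) (if j \<le> m then embv n (\<sigma> j) else undefined)"
      using ij o sub embv_le unfolding leT_def ordP_def by (cases rv) auto
  qed auto
  then show ?thesis using nerve_image_chain[OF N] chain_leT unfolding ALLc_def by (simp add: Sc_ssimp)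
qed

lemma emb_smap: "mono_map m n' \<theta> \<Longrightarrow> emb n m (smap (NN rv n k) m n' \<theta> \<sigma>) = smap (Sc Q le F) m n' \<theta> (emb n n' \<sigma>)"
  unfolding emb_eq NN_smap Sc_smap
proof (rule ext)
  fix i assume "mono_map m n' \<theta>"
  then show "(if i \<le> m then embv n (if i \<le> m then \<sigma> (\<theta> i) else undefined) else undefined) =
    (if i \<le> m then if \<theta> i \<le> n' then embv n (\<sigma> (\<theta> i)) else undefined else undefined)"
    by (cases "i \<le> m") (simp_all add: mono_mapD)
qed

lemma final_case:
  fixes C :: "'a sset"
  assumes kn: "k \<le> n" and qc: "quasicategory C" and mW: "marked_sset C W" and wc: "weakly_closed C W"
    and sub: "W0 \<subseteq> W"
    and \<alpha>: "ssmap (sprod C (Delta 1)) C \<alpha>" and \<alpha>W: "\<alpha> 1 ` (W \<times> ssimp (Delta 1) 1) \<subseteq> W"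
    and \<alpha>id: "\<And>m x. x \<in> ssimp C m \<Longrightarrow> \<alpha> m (x, const_simplex m (if rv then 1 else 0)) = x"
    and \<alpha>F: "\<And>m x. x \<in> ssimp C m \<Longrightarrow> \<alpha> m (x, const_simplex m (if rv then 0 else 1)) = F m x"
    and f: "ssmap (NJ rv n k) C f" and fW: "f 1 ` (MK rv n k \<inter> ssimp (NJ rv n k) 1) \<subseteq> W"
    and g': "ssmap (NN rv n k) C g'" and g'W: "g' 1 ` MK rv n k \<subseteq> W0"
    and g'f: "\<And>m x. x \<in> ssimp (NJ rv n k) m \<Longrightarrow> g' m x = F m (f m x)"
  shows "\<exists>g. ssmap (NN rv n k) C g \<and> g 1 ` MK rv n k \<subseteq> W \<and> (\<forall>m x. x \<in> ssimp (NJ rv n k) m \<longrightarrow> g m x = f m x)"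
proof -
  let ?g0 = "gz n rv g' f \<alpha>"
  have g0: "ssmap (Sc (TT n k) (leT rv) (DD n k)) C ?g0" by (rule g0_ssmap[OF \<alpha> \<alpha>F f g' g'f])
  obtain G where G: "ssmap (Sc (TT n k) (leT rv) (ALLc n k)) C G"
    and GD: "\<forall>m \<sigma>. \<sigma> \<in> ssimp (Sc (TT n k) (leT rv) (DD n k)) m \<longrightarrow> G m \<sigma> = ?g0 m \<sigma>"
    and GW: "\<forall>A\<in>MA rv n k. \<forall>s\<in>ssimp (Sc (TT n k) (leT rv) (ALLc n k)) 1. s ` {0..1} = {(A, 0), topT n} \<longrightarrow> G 1 s \<in> W"
  proof (atomize_elim, rule core[OF kn qc mW wc g0])
    show "(A, 0) \<in> TT n k" if "A \<in> MA rv n k" for A using that unfolding MA_def by auto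
    show "?g0 1 s \<in> W" if "A \<in> MA rv n k" "s \<in> ssimp (Sc (TT n k) (leT rv) (DD n k)) 1"
      "s ` {0..1} \<subseteq> {(A, 0), (A, 1), topT n}" "s 0 \<noteq> s 1" for A s
      by (rule Mw_lemma[OF \<alpha> \<alpha>W f fW g' g'W sub that])
  qed
  define g where "g m \<sigma> = G m (emb n m \<sigma>)" for m \<sigma>
  have gs: "ssmap (NN rv n k) C g"
    unfolding ssmap_def g_def
  proof (intro conjI allI impI)
    fix m \<sigma> assume "\<sigma> \<in> ssimp (NN rv n k) m"
    then show "G m (emb n m \<sigma>) \<in> ssimp C m" using ssmapD1[OF G emb_Sc[OF kn]] by blast
  next
    fix m n' \<theta> \<sigma> assume th: "mono_map m n' \<theta>" and s: "\<sigma> \<in> ssimp (NN rv n k) n'"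
    show "G m (emb n m (smap (NN rv n k) m n' \<theta> \<sigma>)) = smap C m n' \<theta> (G n' (emb n n' \<sigma>))"
      using emb_smap[OF th, of n rv k \<sigma> "TT n k" "leT rv" "ALLc n k"] ssmapD2[OF G th emb_Sc[OF kn s]] by simp
  qed
  have agreeJ: "g m \<sigma> = f m \<sigma>" if s: "\<sigma> \<in> ssimp (NJ rv n k) m" for m \<sigma>
  proof -
    have sN: "\<sigma> \<in> ssimp (NN rv n k) m" and nt: "\<forall>i\<le>m. \<sigma> i \<noteq> {0..n}" using s by (simp_all add: NJ_ssimp)
    have e: "emb n m \<sigma> = (\<lambda>i. if i \<le> m then (\<sigma> i, 0) else undefined)"
      unfolding emb_def using nt by (auto intro!: ext)
    have ES: "emb n m \<sigma> \<in> ssimp (Sc (TT n k) (leT rv) (ALLc n k)) m" by (rule emb_Sc[OF kn sN])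
    have ntop: "topT n \<notin> emb n m \<sigma> ` {0..m}" unfolding e by auto
    have "emb n m \<sigma> ` {0..m} \<in> DD n k" using ES ntop unfolding DD_def ALLc_def by (simp add: Sc_ssimp)
    then have ED: "emb n m \<sigma> \<in> ssimp (Sc (TT n k) (leT rv) (DD n k)) m" using ES by (simp add: Sc_ssimp)
    have pfe: "pf m (emb n m \<sigma>) = \<sigma>"
    proof
      fix i show "pf m (emb n m \<sigma>) i = \<sigma> i" using sN unfolding pf_def e NN_ssimp by auto
    qed
    have pse: "ps rv m (emb n m \<sigma>) = const_simplex m (if rv then 1 else 0)"
      unfolding ps_def e const_simplex_def by (auto intro!: ext)
    have "g m \<sigma> = ?g0 m (emb n m \<sigma>)" unfolding g_def using GD ED by blast
    also have "\<dots> = \<alpha> m (f m \<sigma>, const_simplex m (if rv then 1 else 0))" unfolding gz_def using ntop pfe pse by simp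
    also have "\<dots> = f m \<sigma>" using \<alpha>id ssmapD1[OF f s] by blast
    finally show ?thesis .
  qed
  have marked: "g 1 \<sigma> \<in> W" if s: "\<sigma> \<in> MK rv n k" for \<sigma>
  proof -
    have sN: "\<sigma> \<in> ssimp (NN rv n k) 1" and eqv: "if rv then Min (\<sigma> 0) = Min (\<sigma> 1) else Max (\<sigma> 0) = Max (\<sigma> 1)"
      using s unfolding MK_def by auto
    have sw: "\<sigma> 0 \<in> subsets_with n k" "\<sigma> 1 \<in> subsets_with n k" using sN unfolding NN_ssimp by auto
    have ES: "emb n 1 \<sigma> \<in> ssimp (Sc (TT n k) (leT rv) (ALLc n k)) 1" by (rule emb_Sc[OF kn sN])
    have img: "emb n 1 \<sigma> ` {0..1} = {embv n (\<sigma> 0), embv n (\<sigma> 1)}"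
      unfolding emb_eq by (auto simp: le_Suc_eq)
    consider "\<sigma> 0 \<noteq> {0..n}" "\<sigma> 1 \<noteq> {0..n}" | "\<sigma> 0 = {0..n}" "\<sigma> 1 = {0..n}"
      | A where "A \<noteq> {0..n}" "A \<in> subsets_with n k" "{\<sigma> 0, \<sigma> 1} = {A, {0..n}}"
    proof -
      assume c1: "\<sigma> 0 \<noteq> {0..n} \<Longrightarrow> \<sigma> 1 \<noteq> {0..n} \<Longrightarrow> thesis"
        and c2: "\<sigma> 0 = {0..n} \<Longrightarrow> \<sigma> 1 = {0..n} \<Longrightarrow> thesis"
        and c3: "\<And>A. A \<noteq> {0..n} \<Longrightarrow> A \<in> subsets_with n k \<Longrightarrow> {\<sigma> 0, \<sigma> 1} = {A, {0..n}} \<Longrightarrow> thesis"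
      show thesis
      proof (cases "\<sigma> 0 = {0..n}")
        case T0: True
        show thesis
        proof (cases "\<sigma> 1 = {0..n}")
          case True then show thesis using c2 T0 by simp
        next
          case False then show thesis using c3[of "\<sigma> 1"] T0 sw by (simp add: insert_commute)
        qed
      next
        case F0: False
        show thesis
        proof (cases "\<sigma> 1 = {0..n}")
          case True then show thesis using c3[of "\<sigma> 0"] F0 sw by simp
        next
          case False then show thesis using c1 F0 by simp
        qed
      qed
    qed
    then show ?thesis
    proof cases
      case 1
      then have sJ: "\<sigma> \<in> ssimp (NJ rv n k) 1" using sN by (auto simp: NJ_ssimp le_Suc_eq)
      then have "f 1 \<sigma> \<in> W" using fW s by blast
      then show ?thesis using agreeJ[OF sJ] by simp
    next
      case 2
      have it: "emb n 1 \<sigma> ` {0..1} = {topT n}" unfolding img embv_def using 2 by simp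
      have "chain_on (TT n k) leL (emb n 1 \<sigma> ` {0..1})" using ES unfolding ALLc_def by (simp add: Sc_ssimp)
      then have "emb n 1 \<sigma> ` {0..1} \<in> DD n k" unfolding DD_def using it by simp
      then have ED: "emb n 1 \<sigma> \<in> ssimp (Sc (TT n k) (leT rv) (DD n k)) 1" using ES by (simp add: Sc_ssimp)
      have pfe: "pf 1 (emb n 1 \<sigma>) = \<sigma>"
      proof
        fix i show "pf 1 (emb n 1 \<sigma>) i = \<sigma> i" using sN 2 unfolding pf_def emb_def NN_ssimp
          by (cases "i = 0"; cases "i = 1"; auto)
      qed
      have "topT n \<in> emb n 1 \<sigma> ` {0..1}" using it by simp
      then have "g 1 \<sigma> = g' 1 \<sigma>" unfolding g_def using GD ED pfe unfolding gz_def by simp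
      moreover have "g' 1 \<sigma> \<in> W0" using g'W s by blast
      ultimately show ?thesis using sub by auto
    next
      case 3
      have "A \<in> MA rv n k"
      proof -
        have AT: "(A, 0) \<in> TT n k" using 3 unfolding TT_def by auto
        have or: "(\<sigma> 0 = A \<and> \<sigma> 1 = {0..n}) \<or> (\<sigma> 0 = {0..n} \<and> \<sigma> 1 = A)"
          using 3(3) unfolding doubleton_eq_iff by blast
        have "if rv then 0 \<in> A else n \<in> A"
        proof (cases rv)
          case True
          then have e: "Min (\<sigma> 0) = Min (\<sigma> 1)" using eqv by simp
          have "Min A = Min {0..n}" using or
          proof
            assume "\<sigma> 0 = A \<and> \<sigma> 1 = {0..n}" then show ?thesis using e by simp
          next
            assume "\<sigma> 0 = {0..n} \<and> \<sigma> 1 = A" then show ?thesis using e by simp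
          qed
          then show ?thesis using True Min_0_in[OF 3(2)] Min_top by simp
        next
          case False
          then have e: "Max (\<sigma> 0) = Max (\<sigma> 1)" using eqv by simp
          have "Max A = Max {0..n}" using or
          proof
            assume "\<sigma> 0 = A \<and> \<sigma> 1 = {0..n}" then show ?thesis using e by simp
          next
            assume "\<sigma> 0 = {0..n} \<and> \<sigma> 1 = A" then show ?thesis using e by simp
          qed
          then show ?thesis using False Max_n_in[OF 3(2)] Max_top by simp
        qed
        then show ?thesis using AT unfolding MA_def by auto
      qed
      moreover have "emb n 1 \<sigma> ` {0..1} = {(A, 0), topT n}"
      proof -
        have or: "(\<sigma> 0 = A \<and> \<sigma> 1 = {0..n}) \<or> (\<sigma> 0 = {0..n} \<and> \<sigma> 1 = A)"
          using 3(3) unfolding doubleton_eq_iff by blast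
        then show ?thesis unfolding img embv_def using 3(1) by (auto simp: insert_commute)
      qed
      ultimately show ?thesis unfolding g_def using GW ES by simp
    qed
  qed
  show ?thesis using gs marked agreeJ by blast
qed

lemma ssmap_comp: "ssmap X Y f \<Longrightarrow> ssmap Y Z g \<Longrightarrow> ssmap X Z (\<lambda>m x. g m (f m x))"
  unfolding ssmap_def by simp

lemma part:
  fixes C :: "'a sset" and W W0 :: "'a set" and F :: "nat \<Rightarrow> 'a \<Rightarrow> 'a"
  assumes qc: "quasicategory C" and mW: "marked_sset C W" and sub: "W0 \<subseteq> W"
    and wc: "weakly_closed C W" and F: "marked_map C W C W0 F" and kn: "k \<le> n"
    and rl0: "marked_rlp (NJ rv n k) (NN rv n k) (MK rv n k) C W0"
    and \<alpha>: "marked_map (sprod C (Delta 1)) (W \<times> ssimp (Delta 1) 1) C W \<alpha>"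
    and \<alpha>id: "\<And>m x. x \<in> ssimp C m \<Longrightarrow> \<alpha> m (x, const_simplex m (if rv then 1 else 0)) = x"
    and \<alpha>F: "\<And>m x. x \<in> ssimp C m \<Longrightarrow> \<alpha> m (x, const_simplex m (if rv then 0 else 1)) = F m x"
  shows "marked_rlp (NJ rv n k) (NN rv n k) (MK rv n k) C W"
  unfolding marked_rlp_def
proof (intro allI impI)
  fix f assume fm: "marked_map (NJ rv n k) (MK rv n k \<inter> ssimp (NJ rv n k) 1) C W f"
  have f: "ssmap (NJ rv n k) C f" and fW: "f 1 ` (MK rv n k \<inter> ssimp (NJ rv n k) 1) \<subseteq> W"
    using fm unfolding marked_map_def by auto
  have Fs: "ssmap C C F" and FW: "F 1 ` W \<subseteq> W0" using F unfolding marked_map_def by auto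
  have "marked_map (NJ rv n k) (MK rv n k \<inter> ssimp (NJ rv n k) 1) C W0 (\<lambda>m x. F m (f m x))"
    unfolding marked_map_def using ssmap_comp[OF f Fs] fW FW by auto
  then obtain g' where g'm: "marked_map (NN rv n k) (MK rv n k) C W0 g'"
    and g'f: "\<forall>m x. x \<in> ssimp (NJ rv n k) m \<longrightarrow> g' m x = F m (f m x)"
    using rl0 unfolding marked_rlp_def by blast
  have g': "ssmap (NN rv n k) C g'" and g'W: "g' 1 ` MK rv n k \<subseteq> W0" using g'm unfolding marked_map_def by auto
  have \<alpha>s: "ssmap (sprod C (Delta 1)) C \<alpha>" and \<alpha>W: "\<alpha> 1 ` (W \<times> ssimp (Delta 1) 1) \<subseteq> W"
    using \<alpha> unfolding marked_map_def by auto
  obtain g where g: "ssmap (NN rv n k) C g" "g 1 ` MK rv n k \<subseteq> W"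
    "\<forall>m x. x \<in> ssimp (NJ rv n k) m \<longrightarrow> g m x = f m x"
    using final_case[OF kn qc mW wc sub \<alpha>s \<alpha>W \<alpha>id \<alpha>F f fW g' g'W] g'f by blast
  then show "\<exists>g. marked_map (NN rv n k) (MK rv n k) C W g \<and> (\<forall>m x. x \<in> ssimp (NJ rv n k) m \<longrightarrow> g m x = f m x)"
    unfolding marked_map_def by blast
qed

theorem theorem6p10:
  fixes C :: "'a sset" and W W0 :: "'a set" and F :: "nat \<Rightarrow> 'a \<Rightarrow> 'a"
  assumes qc: "quasicategory C"
    and mW0: "marked_sset C W0"
    and mW: "marked_sset C W"
    and sub: "W0 \<subseteq> W"
    and wc: "weakly_closed C W"
    and F: "marked_map C W C W0 F"
  shows "(rlp_L C W0 \<and> (\<exists>\<alpha>. marked_homotopy C W C W \<alpha> (\<lambda>n x. x) F) \<longrightarrow> CLF C W)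
       \<and> (rlp_R C W0 \<and> (\<exists>\<alpha>. marked_homotopy C W C W \<alpha> F (\<lambda>n x. x)) \<longrightarrow> CRF C W)"
proof (intro conjI impI)
  assume a: "rlp_L C W0 \<and> (\<exists>\<alpha>. marked_homotopy C W C W \<alpha> (\<lambda>n x. x) F)"
  then obtain \<alpha> where h: "marked_homotopy C W C W \<alpha> (\<lambda>n x. x) F" by blast
  have \<alpha>: "marked_map (sprod C (Delta 1)) (W \<times> ssimp (Delta 1) 1) C W \<alpha>"
    and \<alpha>0: "\<And>m x. x \<in> ssimp C m \<Longrightarrow> \<alpha> m (x, const_simplex m 0) = x"
    and \<alpha>1: "\<And>m x. x \<in> ssimp C m \<Longrightarrow> \<alpha> m (x, const_simplex m 1) = F m x"
    using h unfolding marked_homotopy_def by auto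
  have "rlp_L C W"
    unfolding rlp_L_def
  proof (intro allI impI)
    fix n k :: nat assume n: "2 \<le> n" "0 < k" "k \<le> n"
    have rl0: "marked_rlp (NJ False n k) (NN False n k) (MK False n k) C W0"
      using a n unfolding rlp_L_def NJ_L NN_L MK_L by blast
    have "marked_rlp (NJ False n k) (NN False n k) (MK False n k) C W"
      by (rule part[OF qc mW sub wc F n(3) rl0 \<alpha>]) (use \<alpha>0 \<alpha>1 in auto)
    then show "marked_rlp (LJ n k) (L n k) (L_marked n k) C W" unfolding NJ_L NN_L MK_L .
  qed
  then show "CLF C W" unfolding CLF_def using wc by blast
next
  assume a: "rlp_R C W0 \<and> (\<exists>\<alpha>. marked_homotopy C W C W \<alpha> F (\<lambda>n x. x))"
  then obtain \<alpha> where h: "marked_homotopy C W C W \<alpha> F (\<lambda>n x. x)" by blast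
  have \<alpha>: "marked_map (sprod C (Delta 1)) (W \<times> ssimp (Delta 1) 1) C W \<alpha>"
    and \<alpha>0: "\<And>m x. x \<in> ssimp C m \<Longrightarrow> \<alpha> m (x, const_simplex m 0) = F m x"
    and \<alpha>1: "\<And>m x. x \<in> ssimp C m \<Longrightarrow> \<alpha> m (x, const_simplex m 1) = x"
    using h unfolding marked_homotopy_def by auto
  have "rlp_R C W"
    unfolding rlp_R_def
  proof (intro allI impI)
    fix n k :: nat assume n: "2 \<le> n" "k < n"
    have rl0: "marked_rlp (NJ True n k) (NN True n k) (MK True n k) C W0"
      using a n unfolding rlp_R_def NJ_R NN_R MK_R by blast
    have kn: "k \<le> n" using n by simp
    have "marked_rlp (NJ True n k) (NN True n k) (MK True n k) C W"
      by (rule part[OF qc mW sub wc F kn rl0 \<alpha>]) (use \<alpha>0 \<alpha>1 in auto)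
    then show "marked_rlp (RJ n k) (R n k) (R_marked n k) C W" unfolding NJ_R NN_R MK_R .
  qed
  then show "CRF C W" unfolding CRF_def using wc by blast
qed


end
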